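(* Let $v\in\mathbb{Z}^d$ be primitive and $p$ a prime. Let $h\in H_v(\mathbb{Q}_p)\cap\mathrm{SO}_d(\mathbb{Z}_p)\mathrm{SO}_d(\mathbb{Z}[1/p])$, and write $h=c_1\gamma_1$ with $c_1\in\mathrm{SO}_d(\mathbb{Z}_p)$, $\gamma_1\in\mathrm{SO}_d(\mathbb{Z}[1/p])$, and $g_v^{-1}hg_v=c_2\gamma_2^{-1}$ with $c_2\in\mathrm{ASL}_{d-1}(\mathbb{Z}_p)$, $\gamma_2\in\mathrm{ASL}_{d-1}(\mathbb{Z}[1/p])$. Let $\Lambda$ be the $\mathbb{Z}$-span of the first $d-1$ columns of $\gamma_1g_v\gamma_2$. Then $\gamma_1v$ is a primitive integer vector, $\Lambda=\Lambda_{\gamma_1v}$, and $\mathrm{cov}(\Lambda)=\mathrm{cov}(\Lambda_v)$.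
   Context: For primitive $u\in\mathbb{Z}^d$, $\Lambda_u=u^\perp\cap\mathbb{Z}^d$. $H_v\le\mathrm{SO}_d$ is the stabilizer of $v$; $g_v\in\mathrm{SL}_d(\mathbb{Z})$ is a matrix whose first $d-1$ columns form a positively oriented $\mathbb{Z}$-basis of $\Lambda_v$. $\mathrm{ASL}_{d-1}=\{\begin{pmatrix}g&*\\0&1\end{pmatrix}:g\in\mathrm{SL}_{d-1}\}$; $g_v^{-1}H_vg_v\le\mathrm{ASL}_{d-1}$. The covolume of a rank-$(d-1)$ discrete subgroup with basis matrix $b\in M_{d\times(d-1)}(\mathbb{R})$ is $\sqrt{\det(b^tb)}$. *)

theory Defs
  imports "Jordan_Normal_Form.Determinant" "HOL-Computational_Algebra.Primes"
begin

text \<open>q lies in p^k Z_(p), i.e. the p-adic valuation of q is at least k (q = 0 included).\<close>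
definition in_pZ :: "nat \<Rightarrow> nat \<Rightarrow> rat \<Rightarrow> bool" where
  "in_pZ p k q \<longleftrightarrow> (\<exists>a b::int. b \<noteq> 0 \<and> \<not> int p dvd b \<and> q = of_int (int p ^ k * a) / of_int b)"

definition in_Zinvp :: "nat \<Rightarrow> rat \<Rightarrow> bool" where
  "in_Zinvp p q \<longleftrightarrow> (\<exists>(a::int) (k::nat). q = of_int a / of_nat p ^ k)"

text \<open>A d x d matrix over Q_p is represented by a sequence of rational d x d matrices
  that is entrywise Cauchy for the p-adic absolute value; Q_p is the completion of Q.\<close>
definition padic_mat :: "nat \<Rightarrow> nat \<Rightarrow> (nat \<Rightarrow> rat mat) \<Rightarrow> bool" where
  "padic_mat p d X \<longleftrightarrow> (\<forall>n. X n \<in> carrier_mat d d) \<and>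
     (\<forall>k. \<exists>N. \<forall>m\<ge>N. \<forall>n\<ge>N. \<forall>i<d. \<forall>j<d. in_pZ p k ((X m - X n) $$ (i,j)))"

text \<open>Equality in Q_p: the difference tends to 0 p-adically.\<close>
definition padic_num_eq :: "nat \<Rightarrow> (nat \<Rightarrow> rat) \<Rightarrow> (nat \<Rightarrow> rat) \<Rightarrow> bool" where
  "padic_num_eq p x y \<longleftrightarrow> (\<forall>k. \<exists>N. \<forall>n\<ge>N. in_pZ p k (x n - y n))"

definition padic_mat_eq :: "nat \<Rightarrow> nat \<Rightarrow> (nat \<Rightarrow> rat mat) \<Rightarrow> (nat \<Rightarrow> rat mat) \<Rightarrow> bool" where
  "padic_mat_eq p d X Y \<longleftrightarrow> (\<forall>i<d. \<forall>j<d. padic_num_eq p (\<lambda>n. X n $$ (i,j)) (\<lambda>n. Y n $$ (i,j)))"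

definition padic_vec_eq :: "nat \<Rightarrow> nat \<Rightarrow> (nat \<Rightarrow> rat vec) \<Rightarrow> (nat \<Rightarrow> rat vec) \<Rightarrow> bool" where
  "padic_vec_eq p d x y \<longleftrightarrow> (\<forall>i<d. padic_num_eq p (\<lambda>n. x n $ i) (\<lambda>n. y n $ i))"

text \<open>All entries lie in Z_p (the limit of a Cauchy sequence lies in the closed set Z_p
  iff the sequence eventually lies in Z_(p)).\<close>
definition padic_integral :: "nat \<Rightarrow> nat \<Rightarrow> (nat \<Rightarrow> rat mat) \<Rightarrow> bool" where
  "padic_integral p d X \<longleftrightarrow> (\<exists>N. \<forall>n\<ge>N. \<forall>i<d. \<forall>j<d. in_pZ p 0 (X n $$ (i,j)))"

definition SO_Qp :: "nat \<Rightarrow> nat \<Rightarrow> (nat \<Rightarrow> rat mat) set" where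
  "SO_Qp p d = {X. padic_mat p d X \<and>
      padic_mat_eq p d (\<lambda>n. transpose_mat (X n) * X n) (\<lambda>n. 1\<^sub>m d) \<and>
      padic_num_eq p (\<lambda>n. det (X n)) (\<lambda>n. 1)}"

definition SO_Zp :: "nat \<Rightarrow> nat \<Rightarrow> (nat \<Rightarrow> rat mat) set" where
  "SO_Zp p d = {X. X \<in> SO_Qp p d \<and> padic_integral p d X}"

definition H_Qp :: "nat \<Rightarrow> nat \<Rightarrow> int vec \<Rightarrow> (nat \<Rightarrow> rat mat) set" where
  "H_Qp p d v = {X. X \<in> SO_Qp p d \<and>
      padic_vec_eq p d (\<lambda>n. X n *\<^sub>v map_vec of_int v) (\<lambda>n. map_vec of_int v)}"

text \<open>ASL_{d-1}(Z_p): block matrices (g *; 0 1) with g in SL_{d-1}, entries in Z_p.\<close>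
definition ASL_Zp :: "nat \<Rightarrow> nat \<Rightarrow> (nat \<Rightarrow> rat mat) set" where
  "ASL_Zp p d = {X. padic_mat p d X \<and> padic_integral p d X \<and>
      (\<forall>j<d. padic_num_eq p (\<lambda>n. X n $$ (d-1, j)) (\<lambda>n. if j = d-1 then 1 else 0)) \<and>
      padic_num_eq p (\<lambda>n. det (X n)) (\<lambda>n. 1)}"

definition SO_Zinvp :: "nat \<Rightarrow> nat \<Rightarrow> rat mat set" where
  "SO_Zinvp p d = {M. M \<in> carrier_mat d d \<and> (\<forall>i<d. \<forall>j<d. in_Zinvp p (M $$ (i,j))) \<and>
      transpose_mat M * M = 1\<^sub>m d \<and> det M = 1}"

definition ASL_Zinvp :: "nat \<Rightarrow> nat \<Rightarrow> rat mat set" where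
  "ASL_Zinvp p d = {M. M \<in> carrier_mat d d \<and> (\<forall>i<d. \<forall>j<d. in_Zinvp p (M $$ (i,j))) \<and>
      (\<forall>j<d. M $$ (d-1, j) = (if j = d-1 then 1 else 0)) \<and> det M = 1}"

definition mat_inv :: "nat \<Rightarrow> rat mat \<Rightarrow> rat mat" where
  "mat_inv d A = (SOME B. B \<in> carrier_mat d d \<and> A * B = 1\<^sub>m d \<and> B * A = 1\<^sub>m d)"

definition primitive :: "nat \<Rightarrow> int vec \<Rightarrow> bool" where
  "primitive d v \<longleftrightarrow> v \<in> carrier_vec d \<and> v \<noteq> 0\<^sub>v d \<and>
     (\<forall>k::int. (\<forall>i<d. k dvd v $ i) \<longrightarrow> is_unit k)"

definition Lambda :: "nat \<Rightarrow> int vec \<Rightarrow> rat vec set" where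
  "Lambda d u = {map_vec of_int x | x. x \<in> carrier_vec d \<and> x \<bullet> u = 0}"

definition first_cols :: "'a mat \<Rightarrow> nat \<Rightarrow> 'a mat" where
  "first_cols B k = mat (dim_row B) k (\<lambda>(i,j). B $$ (i,j))"

definition zspan :: "rat mat \<Rightarrow> rat vec set" where
  "zspan B = {B *\<^sub>v map_vec of_int c | c. c \<in> carrier_vec (dim_col B)}"

definition lattice_basis :: "rat mat \<Rightarrow> rat vec set \<Rightarrow> bool" where
  "lattice_basis B L \<longleftrightarrow> zspan B = L \<and>
     (\<forall>c \<in> carrier_vec (dim_col B). B *\<^sub>v map_vec of_int c = 0\<^sub>v (dim_row B) \<longrightarrow> c = 0\<^sub>v (dim_col B))"

definition covol :: "nat \<Rightarrow> rat vec set \<Rightarrow> real" where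
  "covol d L = (SOME c. \<exists>B \<in> carrier_mat d (d-1). lattice_basis B L \<and>
       c = sqrt (real_of_rat (det (transpose_mat B * B))))"

text \<open>g is a valid choice of g_v: g in SL_d(Z), its first d-1 columns form a Z-basis of
  Lambda_v, positively oriented (det(b_1,...,b_{d-1},v) > 0).\<close>
definition is_gv :: "nat \<Rightarrow> int vec \<Rightarrow> int mat \<Rightarrow> bool" where
  "is_gv d v g \<longleftrightarrow> g \<in> carrier_mat d d \<and> det g = 1 \<and>
     lattice_basis (first_cols (map_mat of_int g) (d-1)) (Lambda d v) \<and>
     det (mat d d (\<lambda>(i,j). if j < d-1 then g $$ (i,j) else v $ i)) > 0"

end

theory Submission
  imports Defs
begin

lemma pZ_add:
  assumes p: "prime p" and x: "in_pZ p k x" and y: "in_pZ p k y"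
  shows "in_pZ p k (x + y)"
proof -
  from x obtain a b where ab: "b \<noteq> 0" "\<not> int p dvd b" "x = of_int (int p ^ k * a) / of_int b"
    unfolding in_pZ_def by blast
  from y obtain a' b' where ab': "b' \<noteq> 0" "\<not> int p dvd b'" "y = of_int (int p ^ k * a') / of_int b'"
    unfolding in_pZ_def by blast
  have pr: "prime (int p)" using p by simp
  have "\<not> int p dvd b * b'" using ab ab' pr by (simp add: prime_dvd_mult_iff)
  moreover have "x + y = of_int (int p ^ k * (a * b' + a' * b)) / of_int (b * b')"
    using ab ab' by (simp add: field_simps)
  ultimately show ?thesis unfolding in_pZ_def using ab ab' by (intro exI[of _ "a * b' + a' * b"] exI[of _ "b*b'"]) auto
qed

lemma pZ_uminus:
  assumes x: "in_pZ p k x"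
  shows "in_pZ p k (- x)"
proof -
  from x obtain a b where ab: "b \<noteq> 0" "\<not> int p dvd b" "x = of_int (int p ^ k * a) / of_int b"
    unfolding in_pZ_def by blast
  show ?thesis unfolding in_pZ_def using ab by (intro exI[of _ "-a"] exI[of _ b]) auto
qed

lemma pZ_diff:
  assumes p: "prime p" and x: "in_pZ p k x" and y: "in_pZ p k y"
  shows "in_pZ p k (x - y)"
  using pZ_add[OF p x pZ_uminus[OF y]] by simp

lemma pZ_mult:
  assumes p: "prime p" and x: "in_pZ p k x" and y: "in_pZ p l y"
  shows "in_pZ p (k + l) (x * y)"
proof -
  from x obtain a b where ab: "b \<noteq> 0" "\<not> int p dvd b" "x = of_int (int p ^ k * a) / of_int b"
    unfolding in_pZ_def by blast
  from y obtain a' b' where ab': "b' \<noteq> 0" "\<not> int p dvd b'" "y = of_int (int p ^ l * a') / of_int b'"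
    unfolding in_pZ_def by blast
  have pr: "prime (int p)" using p by simp
  have "\<not> int p dvd b * b'" using ab ab' pr by (simp add: prime_dvd_mult_iff)
  moreover have "x * y = of_int (int p ^ (k + l) * (a * a')) / of_int (b * b')"
    unfolding ab(3) ab'(3) by (simp add: power_add)
  ultimately show ?thesis unfolding in_pZ_def using ab ab' by (intro exI[of _ "a * a'"] exI[of _ "b*b'"]) auto
qed

lemma pZ_mono:
  assumes x: "in_pZ p k x" and l: "l \<le> k"
  shows "in_pZ p l x"
proof -
  from x obtain a b where ab: "b \<noteq> 0" "\<not> int p dvd b" "x = of_int (int p ^ k * a) / of_int b"
    unfolding in_pZ_def by blast
  have "int p ^ k * a = int p ^ l * (int p ^ (k - l) * a)"
    using l by (metis le_add_diff_inverse power_add mult.assoc)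
  then have "x = of_int (int p ^ l * (int p ^ (k - l) * a)) / of_int b" using ab(3) by metis
  then show ?thesis unfolding in_pZ_def using ab(1,2) by blast
qed

lemma pZ_int:
  assumes p: "prime p"
  shows "in_pZ p 0 (of_int n)"
proof -
  have "p > 1" by (rule prime_gt_1_nat[OF p])
  then have "\<not> int p dvd 1" by simp
  then show ?thesis unfolding in_pZ_def by (intro exI[of _ n] exI[of _ 1]) auto
qed

lemma pZ_zero: assumes p: "prime p" shows "in_pZ p k 0"
proof -
  have "p > 1" by (rule prime_gt_1_nat[OF p])
  then have "\<not> int p dvd 1" by simp
  then show ?thesis unfolding in_pZ_def by (intro exI[of _ 0] exI[of _ 1]) auto
qed

lemma pZ_sum:
  assumes p: "prime p" and "finite A" and "\<And>i. i \<in> A \<Longrightarrow> in_pZ p k (f i)"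
  shows "in_pZ p k (sum f A)"
  using assms(2,3) by (induction A rule: finite_induct) (auto intro: pZ_add[OF p] pZ_zero[OF p])

lemma pZ_divp:
  assumes p: "prime p" and y: "in_pZ p (k + m) y"
  shows "in_pZ p k (y / of_nat p ^ m)"
proof -
  from y obtain a b where ab: "b \<noteq> 0" "\<not> int p dvd b" "y = of_int (int p ^ (k+m) * a) / of_int b"
    unfolding in_pZ_def by blast
  have "p \<noteq> 0" using p by auto
  then have "y / of_nat p ^ m = of_int (int p ^ k * a) / of_int b"
    using ab by (simp add: power_add field_simps)
  then show ?thesis unfolding in_pZ_def using ab by blast
qed

lemma pZ_bmult:
  assumes p: "prime p" and a: "in_pZ p 0 (of_nat p ^ m * a)" and x: "in_pZ p (k + m) x"
  shows "in_pZ p k (a * x)"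
proof -
  have "in_pZ p (0 + (k + m)) ((of_nat p ^ m * a) * x)" by (rule pZ_mult[OF p a x])
  then have "in_pZ p k ((of_nat p ^ m * a) * x / of_nat p ^ m)" by (intro pZ_divp[OF p]) simp
  moreover have "p \<noteq> 0" using p by auto
  ultimately show ?thesis by simp
qed

lemma pZ_bound:
  assumes p: "prime p"
  shows "\<exists>m. in_pZ p 0 (of_nat p ^ m * a)"
proof -
  obtain n e where ne: "quotient_of a = (n, e)" by (cases "quotient_of a")
  have e: "e > 0" and a: "a = of_int n / of_int e" using ne quotient_of_denom_pos quotient_of_div by blast+
  have pr: "prime (int p)" using p by simp
  have "e \<noteq> 0" using e by simp
  obtain e' where e': "e = int p ^ multiplicity (int p) e * e'" "\<not> int p dvd e'"
    using multiplicity_decompose'[of e "int p"] pr \<open>e \<noteq> 0\<close> by (metis not_prime_unit)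
  let ?m = "multiplicity (int p) e"
  have "e' \<noteq> 0" using e' \<open>e \<noteq> 0\<close> by auto
  have pm: "(of_nat p ^ ?m :: rat) \<noteq> 0" using pr by auto
  have "a = of_int n / (of_nat p ^ ?m * of_int e')"
    using a e'(1) by (metis of_int_mult of_int_of_nat_eq of_int_power)
  then have "of_nat p ^ ?m * a = of_int n / of_int e'"
    using pm by (metis nonzero_mult_divide_mult_cancel_left times_divide_eq_right)
  then have "of_nat p ^ ?m * a = of_int (int p ^ 0 * n) / of_int e'" by simp
  then show ?thesis unfolding in_pZ_def using e' \<open>e' \<noteq> 0\<close> by blast
qed

lemma pZ_Zinvp:
  assumes p: "prime p" and q: "prime q" and pq: "q \<noteq> p" and x: "in_Zinvp p x"
  shows "in_pZ q 0 x"
proof -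
  from x obtain a k where ak: "x = of_int a / of_nat p ^ k" unfolding in_Zinvp_def by blast
  have "\<not> int q dvd int p ^ k"
  proof
    assume "int q dvd int p ^ k"
    then have "q dvd p ^ k" by (metis of_nat_dvd_iff of_nat_power)
    then have "q dvd p" using q prime_dvd_power by blast
    then show False using p q pq primes_dvd_imp_eq by blast
  qed
  moreover have "int p ^ k \<noteq> 0" using p by auto
  moreover have "x = of_int (int q ^ 0 * a) / of_int (int p ^ k)" using ak by simp
  ultimately show ?thesis unfolding in_pZ_def by blast
qed

lemma pZ_all_Ints:
  assumes "\<And>q. prime q \<Longrightarrow> in_pZ q 0 x"
  shows "x \<in> \<int>"
proof (rule ccontr)
  assume nx: "x \<notin> \<int>"
  obtain n e where ne: "quotient_of x = (n, e)" by (cases "quotient_of x")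
  have e: "e > 0" and xd: "x = of_int n / of_int e" and cop: "coprime n e"
    using ne quotient_of_denom_pos quotient_of_div quotient_of_coprime by blast+
  have "e \<noteq> 1" using xd nx by auto
  then have "\<not> is_unit e" using e by auto
  then obtain q where q: "prime q" "q dvd e" using e prime_divisorE[of e] by auto
  have q0: "q > 0" using q prime_gt_0_int by blast
  define qn where "qn = nat q"
  have qn: "prime qn" "int qn = q" using q q0 unfolding qn_def by auto
  from assms[OF qn(1)] obtain a b where ab: "b \<noteq> 0" "\<not> q dvd b" "x = of_int a / of_int b"
    unfolding in_pZ_def qn(2) by auto
  have "of_int n / of_int e = (of_int a / of_int b :: rat)" using xd ab by simp
  then have "(of_int n :: rat) * of_int b = of_int a * of_int e" using e ab(1) by (simp add: frac_eq_eq)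
  then have "n * b = a * e" by (metis of_int_eq_iff of_int_mult)
  then have "q dvd n * b" using q by simp
  then have "q dvd n" using q ab(2) by (simp add: prime_dvd_mult_iff)
  then show False using cop q by (meson coprime_common_divisor not_prime_unit)
qed

lemma pZ_int_dvd:
  assumes p: "prime p" and x: "in_pZ p 1 (of_int n)"
  shows "int p dvd n"
proof -
  from x obtain a b where ab: "b \<noteq> 0" "\<not> int p dvd b" "(of_int n :: rat) = of_int (int p ^ 1 * a) / of_int b"
    unfolding in_pZ_def by blast
  then have "(of_int n :: rat) * of_int b = of_int (int p * a)" by (simp add: eq_divide_eq)
  then have "n * b = int p * a" by (metis of_int_eq_iff of_int_mult)
  then have "int p dvd n * b" by simp
  then show ?thesis using ab p by (simp add: prime_dvd_mult_iff)
qed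

definition bnd :: "nat \<Rightarrow> (nat \<Rightarrow> rat) \<Rightarrow> bool" where
  "bnd p x \<longleftrightarrow> (\<exists>m. eventually (\<lambda>n. in_pZ p 0 (of_nat p ^ m * x n)) sequentially)"

definition mbnd :: "nat \<Rightarrow> nat \<Rightarrow> (nat \<Rightarrow> rat mat) \<Rightarrow> bool" where
  "mbnd p d A \<longleftrightarrow> (\<forall>i<d. \<forall>j<d. bnd p (\<lambda>n. A n $$ (i,j)))"

lemma padic_num_eq_ev:
  "padic_num_eq p x y \<longleftrightarrow> (\<forall>k. eventually (\<lambda>n. in_pZ p k (x n - y n)) sequentially)"
  unfolding padic_num_eq_def eventually_sequentially by simp

lemma bnd_const: "prime p \<Longrightarrow> bnd p (\<lambda>n. c)"
  unfolding bnd_def using pZ_bound by auto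

lemma bnd_int: "eventually (\<lambda>n. in_pZ p 0 (x n)) sequentially \<Longrightarrow> bnd p x"
  unfolding bnd_def by (intro exI[of _ 0]) simp

lemma padic_num_eq_refl: "prime p \<Longrightarrow> padic_num_eq p x x"
  unfolding padic_num_eq_def using pZ_zero by auto

lemma padic_num_eq_sym: assumes "padic_num_eq p x y" shows "padic_num_eq p y x"
  unfolding padic_num_eq_ev
proof
  fix k
  have "eventually (\<lambda>n. in_pZ p k (x n - y n)) sequentially" using assms unfolding padic_num_eq_ev by blast
  then show "eventually (\<lambda>n. in_pZ p k (y n - x n)) sequentially"
  proof eventually_elim
    case (elim n)
    have "y n - x n = - (x n - y n)" by simp
    then show ?case using pZ_uminus[OF elim] by simp
  qed
qed

lemma padic_num_eq_trans:
  assumes p: "prime p" and "padic_num_eq p x y" "padic_num_eq p y z"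
  shows "padic_num_eq p x z"
  unfolding padic_num_eq_ev
proof
  fix k
  have "eventually (\<lambda>n. in_pZ p k (x n - y n)) sequentially"
       "eventually (\<lambda>n. in_pZ p k (y n - z n)) sequentially"
    using assms unfolding padic_num_eq_ev by auto
  then show "eventually (\<lambda>n. in_pZ p k (x n - z n)) sequentially"
  proof eventually_elim
    case (elim n)
    then show ?case using pZ_add[OF p elim(1,2)] by simp
  qed
qed

lemma sum_left:
  assumes p: "prime p" and L: "finite L" and a: "\<And>l. l \<in> L \<Longrightarrow> bnd p (a l)"
    and xy: "\<And>l. l \<in> L \<Longrightarrow> padic_num_eq p (x l) (y l)"
  shows "padic_num_eq p (\<lambda>n. \<Sum>l\<in>L. a l n * x l n) (\<lambda>n. \<Sum>l\<in>L. a l n * y l n)"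
  unfolding padic_num_eq_ev
proof
  fix k
  have "\<forall>l\<in>L. eventually (\<lambda>n. in_pZ p k (a l n * (x l n - y l n))) sequentially"
  proof
    fix l assume l: "l \<in> L"
    from a[OF l] obtain m where m: "eventually (\<lambda>n. in_pZ p 0 (of_nat p ^ m * a l n)) sequentially"
      unfolding bnd_def by blast
    have "eventually (\<lambda>n. in_pZ p (k + m) (x l n - y l n)) sequentially"
      using xy[OF l] unfolding padic_num_eq_ev by blast
    with m show "eventually (\<lambda>n. in_pZ p k (a l n * (x l n - y l n))) sequentially"
      by eventually_elim (rule pZ_bmult[OF p])
  qed
  then have "eventually (\<lambda>n. \<forall>l\<in>L. in_pZ p k (a l n * (x l n - y l n))) sequentially"
    by (rule eventually_ball_finite[OF L])
  then show "eventually (\<lambda>n. in_pZ p k ((\<Sum>l\<in>L. a l n * x l n) - (\<Sum>l\<in>L. a l n * y l n))) sequentially"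
  proof eventually_elim
    case (elim n)
    have eq: "(\<Sum>l\<in>L. a l n * x l n) - (\<Sum>l\<in>L. a l n * y l n) = (\<Sum>l\<in>L. a l n * (x l n - y l n))"
      by (simp add: sum_subtractf right_diff_distrib)
    show ?case unfolding eq by (rule pZ_sum[OF p L]) (use elim in blast)
  qed
qed

lemma sum_right:
  assumes p: "prime p" and L: "finite L" and a: "\<And>l. l \<in> L \<Longrightarrow> bnd p (a l)"
    and xy: "\<And>l. l \<in> L \<Longrightarrow> padic_num_eq p (x l) (y l)"
  shows "padic_num_eq p (\<lambda>n. \<Sum>l\<in>L. x l n * a l n) (\<lambda>n. \<Sum>l\<in>L. y l n * a l n)"
proof -
  have "padic_num_eq p (\<lambda>n. \<Sum>l\<in>L. a l n * x l n) (\<lambda>n. \<Sum>l\<in>L. a l n * y l n)"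
    by (rule sum_left[OF assms])
  moreover have "\<And>n. (\<Sum>l\<in>L. a l n * x l n) = (\<Sum>l\<in>L. x l n * a l n)"
    "\<And>n. (\<Sum>l\<in>L. a l n * y l n) = (\<Sum>l\<in>L. y l n * a l n)" by (simp_all add: mult.commute)
  ultimately show ?thesis by simp
qed

lemma mult_entry:
  assumes "A \<in> carrier_mat nr d" "B \<in> carrier_mat d nc" "i < nr" "j < nc"
  shows "(A * B) $$ (i,j) = (\<Sum>l<d. A $$ (i,l) * B $$ (l,j))"
  using assms by (simp add: scalar_prod_def atLeast0LessThan)

lemma mult_vec_entry:
  assumes "A \<in> carrier_mat nr d" "v \<in> carrier_vec d" "i < nr"
  shows "(A *\<^sub>v v) $ i = (\<Sum>l<d. A $$ (i,l) * v $ l)"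
  using assms by (simp add: scalar_prod_def atLeast0LessThan)

lemma mat_eq_mult_left:
  assumes p: "prime p" and A: "\<And>n. A n \<in> carrier_mat d d" and X: "\<And>n. X n \<in> carrier_mat d d"
    and Y: "\<And>n. Y n \<in> carrier_mat d d" and b: "mbnd p d A" and e: "padic_mat_eq p d X Y"
  shows "padic_mat_eq p d (\<lambda>n. A n * X n) (\<lambda>n. A n * Y n)"
  unfolding padic_mat_eq_def
proof (intro allI impI)
  fix i j assume ij: "i < d" "j < d"
  have "padic_num_eq p (\<lambda>n. \<Sum>l<d. A n $$ (i,l) * X n $$ (l,j)) (\<lambda>n. \<Sum>l<d. A n $$ (i,l) * Y n $$ (l,j))"
    by (rule sum_left[OF p]) (use b e ij in \<open>auto simp: mbnd_def padic_mat_eq_def\<close>)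
  then show "padic_num_eq p (\<lambda>n. (A n * X n) $$ (i, j)) (\<lambda>n. (A n * Y n) $$ (i, j))"
    using mult_entry[OF A X ij] mult_entry[OF A Y ij] by simp
qed

lemma mat_eq_mult_right:
  assumes p: "prime p" and A: "\<And>n. A n \<in> carrier_mat d d" and X: "\<And>n. X n \<in> carrier_mat d d"
    and Y: "\<And>n. Y n \<in> carrier_mat d d" and b: "mbnd p d A" and e: "padic_mat_eq p d X Y"
  shows "padic_mat_eq p d (\<lambda>n. X n * A n) (\<lambda>n. Y n * A n)"
  unfolding padic_mat_eq_def
proof (intro allI impI)
  fix i j assume ij: "i < d" "j < d"
  have "padic_num_eq p (\<lambda>n. \<Sum>l<d. X n $$ (i,l) * A n $$ (l,j)) (\<lambda>n. \<Sum>l<d. Y n $$ (i,l) * A n $$ (l,j))"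
    by (rule sum_right[OF p]) (use b e ij in \<open>auto simp: mbnd_def padic_mat_eq_def\<close>)
  then show "padic_num_eq p (\<lambda>n. (X n * A n) $$ (i, j)) (\<lambda>n. (Y n * A n) $$ (i, j))"
    using mult_entry[OF X A ij] mult_entry[OF Y A ij] by simp
qed

lemma vec_eq_mult_left:
  assumes p: "prime p" and A: "\<And>n. A n \<in> carrier_mat d d" and X: "\<And>n. x n \<in> carrier_vec d"
    and Y: "\<And>n. y n \<in> carrier_vec d" and b: "mbnd p d A" and e: "padic_vec_eq p d x y"
  shows "padic_vec_eq p d (\<lambda>n. A n *\<^sub>v x n) (\<lambda>n. A n *\<^sub>v y n)"
  unfolding padic_vec_eq_def
proof (intro allI impI)
  fix i assume i: "i < d"
  have "padic_num_eq p (\<lambda>n. \<Sum>l<d. A n $$ (i,l) * x n $ l) (\<lambda>n. \<Sum>l<d. A n $$ (i,l) * y n $ l)"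
    by (rule sum_left[OF p]) (use b e i in \<open>auto simp: mbnd_def padic_vec_eq_def\<close>)
  then show "padic_num_eq p (\<lambda>n. (A n *\<^sub>v x n) $ i) (\<lambda>n. (A n *\<^sub>v y n) $ i)"
    using mult_vec_entry[OF A X i] mult_vec_entry[OF A Y i] by simp
qed

lemma vec_eq_mat_eq:
  assumes p: "prime p" and X: "\<And>n. X n \<in> carrier_mat d d"
    and Y: "\<And>n. Y n \<in> carrier_mat d d" and u: "u \<in> carrier_vec d" and e: "padic_mat_eq p d X Y"
  shows "padic_vec_eq p d (\<lambda>n. X n *\<^sub>v u) (\<lambda>n. Y n *\<^sub>v u)"
  unfolding padic_vec_eq_def
proof (intro allI impI)
  fix i assume i: "i < d"
  have "padic_num_eq p (\<lambda>n. \<Sum>l<d. X n $$ (i,l) * u $ l) (\<lambda>n. \<Sum>l<d. Y n $$ (i,l) * u $ l)"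
    by (rule sum_right[OF p, where a="\<lambda>l n. u $ l" and x="\<lambda>l n. X n $$ (i,l)" and y="\<lambda>l n. Y n $$ (i,l)"])
      (use e i bnd_const[OF p] in \<open>auto simp: padic_mat_eq_def\<close>)
  then show "padic_num_eq p (\<lambda>n. (X n *\<^sub>v u) $ i) (\<lambda>n. (Y n *\<^sub>v u) $ i)"
    using mult_vec_entry[OF X u i] mult_vec_entry[OF Y u i] by simp
qed

lemma mbnd_const: "prime p \<Longrightarrow> mbnd p d (\<lambda>n. A)"
  unfolding mbnd_def using bnd_const by auto

lemma mbnd_integral: "padic_integral p d X \<Longrightarrow> mbnd p d X"
  unfolding mbnd_def padic_integral_def by (intro allI impI bnd_int, unfold eventually_sequentially) blast

lemma mbnd_integral_T:
  assumes "padic_integral p d X" "\<And>n. X n \<in> carrier_mat d d"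
  shows "mbnd p d (\<lambda>n. transpose_mat (X n))"
  unfolding mbnd_def
proof (intro allI impI bnd_int)
  fix i j assume ij: "i < d" "j < d"
  from assms(1) obtain N where N: "\<forall>n\<ge>N. \<forall>i<d. \<forall>j<d. in_pZ p 0 (X n $$ (i,j))"
    unfolding padic_integral_def by blast
  show "eventually (\<lambda>n. in_pZ p 0 (transpose_mat (X n) $$ (i,j))) sequentially"
    unfolding eventually_sequentially
  proof (intro exI[of _ N] allI impI)
    fix n assume "N \<le> n"
    then have a: "in_pZ p 0 (X n $$ (j,i))" using N ij by blast
    have e: "transpose_mat (X n) $$ (i,j) = X n $$ (j,i)" using assms(2)[of n] ij by simp
    show "in_pZ p 0 (transpose_mat (X n) $$ (i,j))" unfolding e by (rule a)
  qed
qed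

lemma padic_mat_eq_sym: "padic_mat_eq p d X Y \<Longrightarrow> padic_mat_eq p d Y X"
  unfolding padic_mat_eq_def using padic_num_eq_sym by blast

lemma padic_mat_eq_trans: "prime p \<Longrightarrow> padic_mat_eq p d X Y \<Longrightarrow> padic_mat_eq p d Y Z \<Longrightarrow> padic_mat_eq p d X Z"
  unfolding padic_mat_eq_def by (intro allI impI, rule padic_num_eq_trans[of p _ "\<lambda>n. Y n $$ (_,_)"]) auto

lemma padic_vec_eq_sym: "padic_vec_eq p d X Y \<Longrightarrow> padic_vec_eq p d Y X"
  unfolding padic_vec_eq_def using padic_num_eq_sym by blast

lemma padic_vec_eq_trans: "prime p \<Longrightarrow> padic_vec_eq p d X Y \<Longrightarrow> padic_vec_eq p d Y Z \<Longrightarrow> padic_vec_eq p d X Z"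
  unfolding padic_vec_eq_def by (intro allI impI, rule padic_num_eq_trans[of p _ "\<lambda>n. Y n $ _"]) auto

lemma padic_limit_const:
  assumes p: "prime p" and e: "padic_num_eq p (\<lambda>n. c) y"
    and y: "eventually (\<lambda>n. in_pZ p k (y n)) sequentially"
  shows "in_pZ p k c"
proof -
  have "eventually (\<lambda>n. in_pZ p k (c - y n)) sequentially" using e unfolding padic_num_eq_ev by blast
  with y have "eventually (\<lambda>n. in_pZ p k c) sequentially"
  proof eventually_elim
    case (elim n) then show ?case using pZ_add[OF p elim(2,1)] by simp
  qed
  then show ?thesis by simp
qed

lemma mat_inv_props:
  assumes A: "A \<in> carrier_mat d d" and dA: "det A = (1::rat)"
  shows "mat_inv d A \<in> carrier_mat d d" "A * mat_inv d A = 1\<^sub>m d" "mat_inv d A * A = 1\<^sub>m d"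
proof -
  have "\<exists>B. B \<in> carrier_mat d d \<and> A * B = 1\<^sub>m d \<and> B * A = 1\<^sub>m d"
    using adj_mat[OF A] dA by (intro exI[of _ "adj_mat A"]) auto
  from someI_ex[OF this] show "mat_inv d A \<in> carrier_mat d d" "A * mat_inv d A = 1\<^sub>m d" "mat_inv d A * A = 1\<^sub>m d"
    unfolding mat_inv_def by auto
qed

lemma sp_hom:
  assumes "x \<in> carrier_vec n" "y \<in> carrier_vec n"
  shows "map_vec of_int x \<bullet> map_vec of_int y = (of_int (x \<bullet> y) :: rat)"
  using assms by (simp add: scalar_prod_def of_int_hom.hom_sum)

lemma mult_unit_vec:
  fixes A :: "rat mat"
  assumes A: "A \<in> carrier_mat n k" and j: "j < k"
  shows "A *\<^sub>v unit_vec k j = col A j"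
proof (rule eq_vecI)
  fix i assume "i < dim_vec (col A j)"
  then have i: "i < n" using A by auto
  have "(A *\<^sub>v unit_vec k j) $ i = (\<Sum>l<k. A $$ (i,l) * unit_vec k j $ l)"
    by (rule mult_vec_entry[OF A _ i]) simp
  also have "\<dots> = (\<Sum>l<k. if l = j then A $$ (i,j) else 0)"
    by (rule sum.cong) (auto simp: unit_vec_def)
  also have "\<dots> = A $$ (i,j)" using j by simp
  finally show "(A *\<^sub>v unit_vec k j) $ i = col A j $ i" using A i j by simp
qed (use A in auto)

lemma map_unit_vec: "map_vec of_int (unit_vec k j) = (unit_vec k j :: rat vec)"
  by (rule eq_vecI) (auto simp: unit_vec_def)

lemma col_in_zspan:
  assumes B: "B \<in> carrier_mat n k" and j: "j < k"
  shows "col B j \<in> zspan B"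
proof -
  have "col B j = B *\<^sub>v map_vec of_int (unit_vec k j)"
    using mult_unit_vec[OF B j] map_unit_vec by simp
  then show ?thesis unfolding zspan_def using B by auto
qed

lemma change_basis:
  assumes B: "B \<in> carrier_mat n k" and B': "B' \<in> carrier_mat n k"
    and sub: "\<And>j. j < k \<Longrightarrow> col B' j \<in> zspan B"
  shows "\<exists>U \<in> carrier_mat k k. B' = B * map_mat of_int U"
proof -
  have "\<forall>j. \<exists>c. j < k \<longrightarrow> c \<in> carrier_vec k \<and> col B' j = B *\<^sub>v map_vec of_int c"
    using sub B unfolding zspan_def by fastforce
  then obtain u where u: "\<And>j. j < k \<Longrightarrow> u j \<in> carrier_vec k \<and> col B' j = B *\<^sub>v map_vec of_int (u j)"
    by metis
  define U where "U = mat k k (\<lambda>(i,j). u j $ i)"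
  have U: "U \<in> carrier_mat k k" unfolding U_def by simp
  have colU: "col (map_mat of_int U :: rat mat) j = map_vec of_int (u j)" if j: "j < k" for j
    using u[OF j] j unfolding U_def by (intro eq_vecI) auto
  have "B' = B * map_mat of_int U"
  proof (rule mat_col_eqI)
    fix j assume "j < dim_col (B * map_mat of_int U)"
    then have j: "j < k" using U by simp
    have "col (B * map_mat of_int U) j = B *\<^sub>v col (map_mat of_int U) j"
      using B U j by (intro col_mult2) auto
    then show "col B' j = col (B * map_mat of_int U) j" using colU[OF j] u[OF j] by simp
  qed (use B B' U in auto)
  then show ?thesis using U by blast
qed

lemma basis_det_unique:
  assumes B: "B \<in> carrier_mat n k" and B': "B' \<in> carrier_mat n k"
    and L: "lattice_basis B L" and L': "lattice_basis B' L"
  shows "det (transpose_mat B' * B') = det (transpose_mat B * B)"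
proof -
  have zs: "zspan B = zspan B'" using L L' unfolding lattice_basis_def by simp
  have s1: "\<And>j. j < k \<Longrightarrow> col B' j \<in> zspan B" using col_in_zspan[OF B'] zs by simp
  have s2: "\<And>j. j < k \<Longrightarrow> col B j \<in> zspan B'" using col_in_zspan[OF B] zs by simp
  obtain U where U: "U \<in> carrier_mat k k" and BU: "B' = B * map_mat of_int U"
    using change_basis[OF B B' s1] by blast
  obtain V where V: "V \<in> carrier_mat k k" and BV: "B = B' * map_mat of_int V"
    using change_basis[OF B' B s2] by blast
  let ?U = "map_mat of_int U :: rat mat" and ?V = "map_mat of_int V :: rat mat"
  have UQ: "?U \<in> carrier_mat k k" and VQ: "?V \<in> carrier_mat k k" using U V by auto
  have hUV: "map_mat of_int (U * V) = ?U * ?V" using of_int_hom.mat_hom_mult[OF U V] .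
  have "B = (B * ?U) * ?V" using BV by (simp only: BU)
  also have "\<dots> = B * (?U * ?V)" by (rule assoc_mult_mat[OF B UQ VQ])
  finally have BUV: "B * (?U * ?V) = B" by simp
  have UV1: "U * V = 1\<^sub>m k"
  proof (rule mat_col_eqI)
    fix j assume "j < dim_col (1\<^sub>m k :: int mat)"
    then have j: "j < k" by simp
    let ?c = "col (U * V) j - col (1\<^sub>m k) j"
    have c: "?c \<in> carrier_vec k" unfolding carrier_vec_def using U V by simp
    have mc: "map_vec of_int ?c = col (map_mat of_int (U * V)) j - col (map_mat of_int (1\<^sub>m k)) j"
      using U V j by (intro eq_vecI) auto
    have e0: "B *\<^sub>v map_vec of_int ?c = B *\<^sub>v (col (?U * ?V) j - col (1\<^sub>m k) j)"
      unfolding mc hUV of_int_hom.mat_hom_one by simp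
    have e1: "B *\<^sub>v (col (?U * ?V) j - col (1\<^sub>m k) j) = B *\<^sub>v col (?U * ?V) j - B *\<^sub>v col (1\<^sub>m k) j"
      using B UQ VQ j by (intro mult_minus_distrib_mat_vec) auto
    have e2: "B *\<^sub>v col (?U * ?V) j = col B j"
      using col_mult2[OF B mult_carrier_mat[OF UQ VQ] j] unfolding BUV by simp
    have e3: "B *\<^sub>v col (1\<^sub>m k) j = col B j"
      using col_mult2[OF B one_carrier_mat j] unfolding right_mult_one_mat[OF B] by simp
    have cB: "col B j \<in> carrier_vec n" using col_dim[of B j] B by simp
    have e4: "col B j - col B j = 0\<^sub>v n" by (rule minus_cancel_vec[OF cB])
    have Bc0: "B *\<^sub>v map_vec of_int ?c = 0\<^sub>v n" unfolding e0 e1 e2 e3 e4 ..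
    have dims: "dim_col B = k" "dim_row B = n" using B by auto
    have "\<forall>c\<in>carrier_vec (dim_col B). B *\<^sub>v map_vec of_int c = 0\<^sub>v (dim_row B) \<longrightarrow> c = 0\<^sub>v (dim_col B)"
      using L unfolding lattice_basis_def by blast
    then have indep: "\<forall>c\<in>carrier_vec k. B *\<^sub>v map_vec of_int c = 0\<^sub>v n \<longrightarrow> c = 0\<^sub>v k"
      unfolding dims .
    have c0: "?c = 0\<^sub>v k" using indep c Bc0 by blast
    show "col (U * V) j = col (1\<^sub>m k) j"
    proof (rule eq_vecI)
      fix i assume "i < dim_vec (col (1\<^sub>m k) j)"
      then have i: "i < k" by simp
      have "?c $ i = 0" using c0 i by simp
      then show "col (U * V) j $ i = col (1\<^sub>m k) j $ i" using U V i j by simp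
    qed (use U V in simp)
  qed (use U V in auto)
  have "det U * det V = 1" using det_mult[OF U V] UV1 by simp
  then have "(det U = 1 \<and> det V = 1) \<or> (det U = -1 \<and> det V = -1)" by (rule zmult_eq_1_iff[THEN iffD1])
  then have dU: "det U * det U = 1" by auto
  have Bt: "transpose_mat B \<in> carrier_mat k n" using B by simp
  have Ut: "transpose_mat ?U \<in> carrier_mat k k" using UQ by simp
  have BtB: "transpose_mat B * B \<in> carrier_mat k k" using B by simp
  have BUc: "B * ?U \<in> carrier_mat n k" using B UQ by simp
  have "transpose_mat B' * B' = (transpose_mat ?U * transpose_mat B) * (B * ?U)"
    unfolding BU using transpose_mult[OF B UQ] by simp
  also have "\<dots> = transpose_mat ?U * (transpose_mat B * (B * ?U))"
    by (rule assoc_mult_mat[OF Ut Bt BUc])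
  also have "transpose_mat B * (B * ?U) = (transpose_mat B * B) * ?U"
    by (rule assoc_mult_mat[OF Bt B UQ, symmetric])
  also have "transpose_mat ?U * ((transpose_mat B * B) * ?U) = (transpose_mat ?U * (transpose_mat B * B)) * ?U"
    by (rule assoc_mult_mat[OF Ut BtB UQ, symmetric])
  finally have eq: "transpose_mat B' * B' = (transpose_mat ?U * (transpose_mat B * B)) * ?U" .
  have "det (transpose_mat B' * B') = det (transpose_mat ?U * (transpose_mat B * B)) * det ?U"
    unfolding eq by (rule det_mult[OF mult_carrier_mat[OF Ut BtB] UQ])
  also have "\<dots> = det (transpose_mat ?U) * det (transpose_mat B * B) * det ?U"
    by (simp only: det_mult[OF Ut BtB])
  also have "\<dots> = det (transpose_mat B * B) * (of_int (det U * det U))"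
    unfolding det_transpose[OF UQ] of_int_hom.hom_det by simp
  finally show ?thesis using dU by simp
qed

lemma covol_eq:
  assumes B: "B \<in> carrier_mat d (d-1)" and L: "lattice_basis B L"
  shows "covol d L = sqrt (real_of_rat (det (transpose_mat B * B)))"
proof -
  let ?P = "\<lambda>c. \<exists>B \<in> carrier_mat d (d-1). lattice_basis B L \<and> c = sqrt (real_of_rat (det (transpose_mat B * B)))"
  have ex: "?P (sqrt (real_of_rat (det (transpose_mat B * B))))"
    using B L by blast
  have "?P (SOME c. ?P c)" by (rule someI[of ?P, OF ex])
  then obtain B' where B': "B' \<in> carrier_mat d (d-1)" "lattice_basis B' L"
    "(SOME c. ?P c) = sqrt (real_of_rat (det (transpose_mat B' * B')))" by blast
  have "covol d L = (SOME c. ?P c)" unfolding covol_def by simp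
  then show ?thesis using basis_det_unique[OF B B'(1) L B'(2)] B'(3) by simp
qed

lemma pZ_dvd_int:
  assumes p: "prime p" and dv: "int p dvd x"
  shows "in_pZ p 1 (of_int x)"
proof -
  from dv obtain t where t: "x = int p * t" by (elim dvdE)
  have "p > 1" by (rule prime_gt_1_nat[OF p])
  then have nd: "\<not> int p dvd 1" by simp
  have e: "(of_int x :: rat) = of_int (int p ^ 1 * t) / of_int 1" using t by simp
  show ?thesis unfolding in_pZ_def
    by (rule exI[of _ t], rule exI[of _ 1]) (use nd e in simp)
qed

lemma mat_mult_pZ:
  assumes q: "prime q" and A: "A \<in> carrier_mat n m" and B: "B \<in> carrier_mat m k"
    and a: "\<forall>i<n. \<forall>l<m. in_pZ q 0 (A $$ (i,l))" and b: "\<forall>l<m. \<forall>j<k. in_pZ q 0 (B $$ (l,j))"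
  shows "\<forall>i<n. \<forall>j<k. in_pZ q 0 ((A * B) $$ (i,j))"
proof (intro allI impI)
  fix i j assume ij: "i < n" "j < k"
  have "in_pZ q 0 (\<Sum>l<m. A $$ (i,l) * B $$ (l,j))"
  proof (rule pZ_sum[OF q])
    fix l assume "l \<in> {..<m}"
    then have l: "l < m" by simp
    have "in_pZ q (0 + 0) (A $$ (i,l) * B $$ (l,j))"
      by (rule pZ_mult[OF q]) (use a b ij l in blast)+
    then show "in_pZ q 0 (A $$ (i,l) * B $$ (l,j))" by simp
  qed simp
  then show "in_pZ q 0 ((A * B) $$ (i,j))" using mult_entry[OF A B ij] by simp
qed

lemma mat_vec_pZ:
  assumes q: "prime q" and A: "A \<in> carrier_mat n m" and v: "v \<in> carrier_vec m"
    and a: "\<forall>i<n. \<forall>l<m. in_pZ q 0 (A $$ (i,l))" and b: "\<forall>l<m. in_pZ q k (v $ l)" and i: "i < n"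
  shows "in_pZ q k ((A *\<^sub>v v) $ i)"
proof -
  have "in_pZ q k (\<Sum>l<m. A $$ (i,l) * v $ l)"
  proof (rule pZ_sum[OF q])
    fix l assume "l \<in> {..<m}"
    then have l: "l < m" by simp
    have "in_pZ q (0 + k) (A $$ (i,l) * v $ l)"
      by (rule pZ_mult[OF q]) (use a b i l in blast)+
    then show "in_pZ q k (A $$ (i,l) * v $ l)" by simp
  qed simp
  then show ?thesis using mult_vec_entry[OF A v i] by simp
qed

lemma sum_last:
  fixes d :: nat
  assumes "d \<ge> 1"
  shows "(\<Sum>l<d. f l) = (\<Sum>l<d-1. f l) + f (d-1)"
proof -
  have "d = Suc (d-1)" using assms by simp
  then have "(\<Sum>l<d. f l) = (\<Sum>l<Suc (d-1). f l)" by simp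
  also have "\<dots> = (\<Sum>l<d-1. f l) + f (d-1)" by (rule sum.lessThan_Suc)
  finally show ?thesis .
qed

lemma fc_carrier: "A \<in> carrier_mat n m \<Longrightarrow> first_cols A k \<in> carrier_mat n k"
  unfolding first_cols_def by simp

lemma fc_dims[simp]: "dim_row (first_cols A k) = dim_row A" "dim_col (first_cols A k) = k"
  unfolding first_cols_def by simp_all

lemma fc_index: "i < dim_row A \<Longrightarrow> j < k \<Longrightarrow> first_cols A k $$ (i,j) = A $$ (i,j)"
  unfolding first_cols_def by simp

lemma fc_col: assumes "j < k" shows "col (first_cols A k) j = col A j"
proof (rule eq_vecI)
  fix i assume "i < dim_vec (col A j)"
  then have "i < dim_row A" by simp
  then show "col (first_cols A k) j $ i = col A j $ i" using assms unfolding first_cols_def col_def by simp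
qed simp

lemma fc_map: "k \<le> dim_col A \<Longrightarrow> first_cols (map_mat f A) k = map_mat f (first_cols A k)"
  unfolding first_cols_def by (rule eq_matI) auto

lemma fc_mult_vec:
  fixes A :: "'a :: comm_ring_1 mat"
  assumes A: "A \<in> carrier_mat n d" and d: "d \<ge> 1" and y: "y \<in> carrier_vec d" and y0: "y $ (d-1) = 0"
  shows "first_cols A (d-1) *\<^sub>v vec (d-1) (\<lambda>l. y $ l) = A *\<^sub>v y"
proof (rule eq_vecI)
  fix i assume "i < dim_vec (A *\<^sub>v y)"
  then have i: "i < n" using A by simp
  have F: "first_cols A (d-1) \<in> carrier_mat n (d-1)" by (rule fc_carrier[OF A])
  have "(first_cols A (d-1) *\<^sub>v vec (d-1) (\<lambda>l. y $ l)) $ i = (\<Sum>l<d-1. first_cols A (d-1) $$ (i,l) * vec (d-1) (\<lambda>l. y $ l) $ l)"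
    by (rule mult_vec_entry[OF F _ i]) simp
  also have "\<dots> = (\<Sum>l<d-1. A $$ (i,l) * y $ l)"
    by (rule sum.cong) (use A i in \<open>auto simp: fc_index\<close>)
  also have "\<dots> = (\<Sum>l<d. A $$ (i,l) * y $ l)"
    using sum_last[OF d, of "\<lambda>l. A $$ (i,l) * y $ l"] y0 by simp
  also have "\<dots> = (A *\<^sub>v y) $ i" by (rule mult_vec_entry[OF A y i, symmetric])
  finally show "(first_cols A (d-1) *\<^sub>v vec (d-1) (\<lambda>l. y $ l)) $ i = (A *\<^sub>v y) $ i" .
qed (use A in simp)

lemma fc_mult_left:
  assumes X: "X \<in> carrier_mat n m" and Y: "Y \<in> carrier_mat m k'" and k: "k \<le> k'"
  shows "first_cols (X * Y) k = X * first_cols Y k"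
proof (rule eq_matI)
  fix i j assume "i < dim_row (X * first_cols Y k)" "j < dim_col (X * first_cols Y k)"
  then have ij: "i < n" "j < k" using X by auto
  have F: "first_cols Y k \<in> carrier_mat m k" by (rule fc_carrier[OF Y])
  have "first_cols (X * Y) k $$ (i,j) = (X * Y) $$ (i,j)" using ij X by (simp add: fc_index)
  also have "\<dots> = (\<Sum>l<m. X $$ (i,l) * Y $$ (l,j))" using ij k by (intro mult_entry[OF X Y]) auto
  also have "\<dots> = (\<Sum>l<m. X $$ (i,l) * first_cols Y k $$ (l,j))"
    by (rule sum.cong) (use Y ij in \<open>auto simp: fc_index\<close>)
  also have "\<dots> = (X * first_cols Y k) $$ (i,j)" by (rule mult_entry[OF X F ij, symmetric])
  finally show "first_cols (X * Y) k $$ (i,j) = (X * first_cols Y k) $$ (i,j)" .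
qed (use X Y in auto)

lemma fc_mult_right:
  assumes X: "X \<in> carrier_mat n d" and Y: "Y \<in> carrier_mat d d" and d: "d \<ge> 1"
    and last: "\<And>j. j < d - 1 \<Longrightarrow> Y $$ (d-1, j) = 0"
  shows "first_cols (X * Y) (d-1) = first_cols X (d-1) * mat (d-1) (d-1) (\<lambda>(i,j). Y $$ (i,j))"
proof (rule eq_matI)
  let ?A = "mat (d-1) (d-1) (\<lambda>(i,j). Y $$ (i,j))"
  have F: "first_cols X (d-1) \<in> carrier_mat n (d-1)" by (rule fc_carrier[OF X])
  have Ac: "?A \<in> carrier_mat (d-1) (d-1)" by simp
  fix i j assume "i < dim_row (first_cols X (d-1) * ?A)" "j < dim_col (first_cols X (d-1) * ?A)"
  then have ij: "i < n" "j < d-1" using X by auto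
  have "first_cols (X * Y) (d-1) $$ (i,j) = (X * Y) $$ (i,j)" using ij X by (simp add: fc_index)
  also have "\<dots> = (\<Sum>l<d. X $$ (i,l) * Y $$ (l,j))" using ij by (intro mult_entry[OF X Y]) auto
  also have "\<dots> = (\<Sum>l<d-1. X $$ (i,l) * Y $$ (l,j))"
    using sum_last[OF d, of "\<lambda>l. X $$ (i,l) * Y $$ (l,j)"] last[OF ij(2)] by simp
  also have "\<dots> = (\<Sum>l<d-1. first_cols X (d-1) $$ (i,l) * ?A $$ (l,j))"
    by (rule sum.cong) (use X ij in \<open>auto simp: fc_index\<close>)
  also have "\<dots> = (first_cols X (d-1) * ?A) $$ (i,j)" by (rule mult_entry[OF F Ac ij, symmetric])
  finally show "first_cols (X * Y) (d-1) $$ (i,j) = (first_cols X (d-1) * ?A) $$ (i,j)" .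
qed (use X in auto)

lemma det_block:
  fixes Y :: "'a :: comm_ring_1 mat"
  assumes Y: "Y \<in> carrier_mat d d" and d: "d \<ge> 1"
    and last: "\<And>j. j < d \<Longrightarrow> Y $$ (d-1, j) = (if j = d-1 then 1 else 0)"
  shows "det (mat (d-1) (d-1) (\<lambda>(i,j). Y $$ (i,j))) = det Y"
proof -
  have dd: "d - 1 < d" using d by simp
  have "det Y = (\<Sum>j<d. Y $$ (d-1,j) * cofactor Y (d-1) j)" by (rule laplace_expansion_row[OF Y dd])
  also have "\<dots> = (\<Sum>j<d. if j = d-1 then cofactor Y (d-1) j else 0)"
  proof (rule sum.cong[OF refl])
    fix j assume "j \<in> {..<d}"
    then have "Y $$ (d-1, j) = (if j = d-1 then 1 else 0)" using last by simp
    then show "Y $$ (d-1,j) * cofactor Y (d-1) j = (if j = d-1 then cofactor Y (d-1) j else 0)" by simp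
  qed
  also have "\<dots> = cofactor Y (d-1) (d-1)" using dd by simp
  also have "\<dots> = det (mat_delete Y (d-1) (d-1))"
    unfolding cofactor_def by (simp add: mult_2[symmetric])
  also have "mat_delete Y (d-1) (d-1) = mat (d-1) (d-1) (\<lambda>(i,j). Y $$ (i,j))"
    unfolding mat_delete_def using Y by (intro eq_matI) auto
  finally show ?thesis by simp
qed

theorem corollary3p3:
  fixes d p :: nat and v :: "int vec" and g :: "int mat"
    and h c1 c2 :: "nat \<Rightarrow> rat mat" and \<gamma>1 \<gamma>2 :: "rat mat"
  assumes "prime p"
    and "primitive d v"
    and "is_gv d v g"
    and "h \<in> H_Qp p d v"
    and "c1 \<in> SO_Zp p d" and "\<gamma>1 \<in> SO_Zinvp p d"
    and "padic_mat_eq p d h (\<lambda>n. c1 n * \<gamma>1)"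
    and "c2 \<in> ASL_Zp p d" and "\<gamma>2 \<in> ASL_Zinvp p d"
    and "padic_mat_eq p d
           (\<lambda>n. mat_inv d (map_mat of_int g) * h n * map_mat of_int g)
           (\<lambda>n. c2 n * mat_inv d \<gamma>2)"
  shows "\<exists>w. \<gamma>1 *\<^sub>v map_vec of_int v = map_vec of_int w \<and> primitive d w \<and>
           zspan (first_cols (\<gamma>1 * map_mat of_int g * \<gamma>2) (d-1)) = Lambda d w \<and>
           covol d (zspan (first_cols (\<gamma>1 * map_mat of_int g * \<gamma>2) (d-1)))
             = covol d (Lambda d v)"
proof -
  note p = assms(1)
  define G where "G = (map_mat of_int g :: rat mat)"
  define vQ where "vQ = (map_vec of_int v :: rat vec)"
  have v: "v \<in> carrier_vec d" and v0: "v \<noteq> 0\<^sub>v d"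
    and vprim: "\<And>k::int. (\<forall>i<d. k dvd v $ i) \<Longrightarrow> is_unit k"
    using assms(2) unfolding primitive_def by blast+
  have d1: "d \<ge> 1"
  proof (rule ccontr)
    assume "\<not> d \<ge> 1"
    then have "d = 0" by simp
    then have "v = 0\<^sub>v d" using v by (intro eq_vecI) auto
    then show False using v0 by contradiction
  qed
  have g: "g \<in> carrier_mat d d" and dg: "det g = 1"
    and Gbasis: "lattice_basis (first_cols G (d-1)) (Lambda d v)"
    using assms(3) unfolding is_gv_def G_def by blast+
  have Gc: "G \<in> carrier_mat d d" unfolding G_def using g by simp
  have dG: "det G = 1" unfolding G_def of_int_hom.hom_det dg by simp
  have vQc: "vQ \<in> carrier_vec d" unfolding vQ_def using v by simp
  have hS: "h \<in> SO_Qp p d" and hv: "padic_vec_eq p d (\<lambda>n. h n *\<^sub>v vQ) (\<lambda>n. vQ)"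
    using assms(4) unfolding H_Qp_def vQ_def by blast+
  have hc: "\<And>n. h n \<in> carrier_mat d d" using hS unfolding SO_Qp_def padic_mat_def by blast
  have c1S: "c1 \<in> SO_Qp p d" and c1int: "padic_integral p d c1"
    using assms(5) unfolding SO_Zp_def by blast+
  have c1c: "\<And>n. c1 n \<in> carrier_mat d d" using c1S unfolding SO_Qp_def padic_mat_def by blast
  have c1o: "padic_mat_eq p d (\<lambda>n. transpose_mat (c1 n) * c1 n) (\<lambda>n. 1\<^sub>m d)"
    using c1S unfolding SO_Qp_def by blast
  have g1c: "\<gamma>1 \<in> carrier_mat d d" and g1Z: "\<forall>i<d. \<forall>j<d. in_Zinvp p (\<gamma>1 $$ (i,j))"
    and g1o: "transpose_mat \<gamma>1 * \<gamma>1 = 1\<^sub>m d" and dg1: "det \<gamma>1 = 1"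
    using assms(6) unfolding SO_Zinvp_def by blast+
  have c2c: "\<And>n. c2 n \<in> carrier_mat d d" and c2int: "padic_integral p d c2"
    using assms(8) unfolding ASL_Zp_def padic_mat_def by blast+
  have g2c: "\<gamma>2 \<in> carrier_mat d d" and g2Z: "\<forall>i<d. \<forall>j<d. in_Zinvp p (\<gamma>2 $$ (i,j))"
    and g2last: "\<forall>j<d. \<gamma>2 $$ (d-1, j) = (if j = d-1 then 1 else 0)" and dg2: "det \<gamma>2 = 1"
    using assms(9) unfolding ASL_Zinvp_def by blast+
  note E1 = assms(7)
  have E2: "padic_mat_eq p d (\<lambda>n. mat_inv d G * h n * G) (\<lambda>n. c2 n * mat_inv d \<gamma>2)"
    using assms(10) unfolding G_def .
  define wQ where "wQ = \<gamma>1 *\<^sub>v vQ"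
  have wQc: "wQ \<in> carrier_vec d" unfolding wQ_def by (rule mult_mat_vec_carrier[OF g1c vQc])
  have vw: "vQ = transpose_mat \<gamma>1 *\<^sub>v wQ"
  proof -
    have "transpose_mat \<gamma>1 *\<^sub>v wQ = (transpose_mat \<gamma>1 * \<gamma>1) *\<^sub>v vQ"
      unfolding wQ_def using g1c vQc by (simp add: assoc_mult_mat_vec)
    also have "\<dots> = vQ" unfolding g1o using vQc by simp
    finally show ?thesis by simp
  qed
  have cw: "padic_vec_eq p d (\<lambda>n. c1 n *\<^sub>v wQ) (\<lambda>n. vQ)"
  proof -
    have "padic_vec_eq p d (\<lambda>n. h n *\<^sub>v vQ) (\<lambda>n. (c1 n * \<gamma>1) *\<^sub>v vQ)"
      by (rule vec_eq_mat_eq[OF p hc mult_carrier_mat[OF c1c g1c] vQc E1])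
    moreover have "\<And>n. (c1 n * \<gamma>1) *\<^sub>v vQ = c1 n *\<^sub>v wQ"
      unfolding wQ_def by (rule assoc_mult_mat_vec[OF c1c g1c vQc])
    ultimately have "padic_vec_eq p d (\<lambda>n. h n *\<^sub>v vQ) (\<lambda>n. c1 n *\<^sub>v wQ)" by simp
    from padic_vec_eq_trans[OF p padic_vec_eq_sym[OF this] hv] show ?thesis .
  qed
  have c1Tc: "\<And>n. transpose_mat (c1 n) \<in> carrier_mat d d" using c1c by simp
  have g1Tc: "transpose_mat \<gamma>1 \<in> carrier_mat d d" using g1c by simp
  have c1Tb: "mbnd p d (\<lambda>n. transpose_mat (c1 n))" by (rule mbnd_integral_T[OF c1int c1c])
  obtain N1 where N1: "\<forall>n\<ge>N1. \<forall>i<d. \<forall>j<d. in_pZ p 0 (c1 n $$ (i,j))"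
    using c1int unfolding padic_integral_def by blast
  have vQi: "\<And>i. i < d \<Longrightarrow> vQ $ i = of_int (v $ i)" unfolding vQ_def using v by simp
  have vQZ: "\<forall>l<d. in_pZ q 0 (vQ $ l)" if q: "prime q" for q :: nat
  proof (intro allI impI)
    fix l assume "l < d"
    then show "in_pZ q 0 (vQ $ l)" using vQi pZ_int[OF q] by simp
  qed
  have g1TZ: "\<forall>i<d. \<forall>l<d. in_pZ q 0 (transpose_mat \<gamma>1 $$ (i,l))" if q: "prime q" "q \<noteq> p" for q :: nat
  proof (intro allI impI)
    fix i l assume il: "i < d" "l < d"
    have "in_Zinvp p (\<gamma>1 $$ (l,i))" using g1Z il by blast
    then have "in_pZ q 0 (\<gamma>1 $$ (l,i))" by (rule pZ_Zinvp[OF p q(1) q(2)])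
    then show "in_pZ q 0 (transpose_mat \<gamma>1 $$ (i,l))" using g1c il by simp
  qed
  have g1Zq: "\<forall>i<d. \<forall>l<d. in_pZ q 0 (\<gamma>1 $$ (i,l))" if q: "prime q" "q \<noteq> p" for q :: nat
  proof (intro allI impI)
    fix i l assume il: "i < d" "l < d"
    have "in_Zinvp p (\<gamma>1 $$ (i,l))" using g1Z il by blast
    then show "in_pZ q 0 (\<gamma>1 $$ (i,l))" by (rule pZ_Zinvp[OF p q(1) q(2)])
  qed
  have c1T_int: "\<forall>i<d. \<forall>l<d. in_pZ p 0 (transpose_mat (c1 n) $$ (i,l))" if n: "n \<ge> N1" for n
  proof (intro allI impI)
    fix i l assume il: "i < d" "l < d"
    have "in_pZ p 0 (c1 n $$ (l,i))" using N1 n il by blast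
    then show "in_pZ p 0 (transpose_mat (c1 n) $$ (i,l))" using c1c[of n] il by simp
  qed
  have c1_int: "\<forall>i<d. \<forall>l<d. in_pZ p 0 (c1 n $$ (i,l))" if n: "n \<ge> N1" for n
    using N1 n by blast
  have wZq: "in_pZ q 0 (wQ $ i)" if q: "prime q" "q \<noteq> p" and i: "i < d" for q :: nat and i
    unfolding wQ_def by (rule mat_vec_pZ[OF q(1) g1c vQc g1Zq[OF q] vQZ[OF q(1)] i])
  have wZp: "in_pZ p 0 (wQ $ i)" if i: "i < d" for i
  proof -
    have cwc: "\<And>n. c1 n *\<^sub>v wQ \<in> carrier_vec d" by (rule mult_mat_vec_carrier[OF c1c wQc])
    have s1: "padic_vec_eq p d (\<lambda>n. transpose_mat (c1 n) *\<^sub>v (c1 n *\<^sub>v wQ)) (\<lambda>n. transpose_mat (c1 n) *\<^sub>v vQ)"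
      by (rule vec_eq_mult_left[OF p c1Tc cwc vQc c1Tb cw])
    have s2: "padic_vec_eq p d (\<lambda>n. (transpose_mat (c1 n) * c1 n) *\<^sub>v wQ) (\<lambda>n. 1\<^sub>m d *\<^sub>v wQ)"
      by (rule vec_eq_mat_eq[OF p mult_carrier_mat[OF c1Tc c1c] one_carrier_mat wQc c1o])
    have r1: "\<And>n. (transpose_mat (c1 n) * c1 n) *\<^sub>v wQ = transpose_mat (c1 n) *\<^sub>v (c1 n *\<^sub>v wQ)"
      by (rule assoc_mult_mat_vec[OF c1Tc c1c wQc])
    have r2: "1\<^sub>m d *\<^sub>v wQ = wQ" by (rule one_mult_mat_vec[OF wQc])
    have s2': "padic_vec_eq p d (\<lambda>n. transpose_mat (c1 n) *\<^sub>v (c1 n *\<^sub>v wQ)) (\<lambda>n. wQ)"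
      using s2 unfolding r1 r2 .
    have s3: "padic_vec_eq p d (\<lambda>n. wQ) (\<lambda>n. transpose_mat (c1 n) *\<^sub>v vQ)"
      by (rule padic_vec_eq_trans[OF p padic_vec_eq_sym[OF s2'] s1])
    then have s4: "padic_num_eq p (\<lambda>n. wQ $ i) (\<lambda>n. (transpose_mat (c1 n) *\<^sub>v vQ) $ i)"
      unfolding padic_vec_eq_def using i by blast
    have ev: "eventually (\<lambda>n. in_pZ p 0 ((transpose_mat (c1 n) *\<^sub>v vQ) $ i)) sequentially"
      unfolding eventually_sequentially
    proof (intro exI[of _ N1] allI impI)
      fix n assume n: "N1 \<le> n"
      show "in_pZ p 0 ((transpose_mat (c1 n) *\<^sub>v vQ) $ i)"
        by (rule mat_vec_pZ[OF p c1Tc vQc c1T_int[OF n] vQZ[OF p] i])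
    qed
    show ?thesis by (rule padic_limit_const[OF p s4 ev])
  qed
  have wInt: "wQ $ i \<in> \<int>" if i: "i < d" for i
  proof (rule pZ_all_Ints)
    fix q :: nat assume q: "prime q"
    show "in_pZ q 0 (wQ $ i)"
    proof (cases "q = p")
      case True then show ?thesis using wZp[OF i] by simp
    next
      case False then show ?thesis by (rule wZq[OF q _ i])
    qed
  qed
  define w where "w = vec d (\<lambda>i. \<lfloor>wQ $ i\<rfloor>)"
  have wc: "w \<in> carrier_vec d" unfolding w_def by simp
  have ww: "map_vec of_int w = wQ"
  proof (rule eq_vecI)
    fix i assume "i < dim_vec wQ"
    then have i: "i < d" using wQc by simp
    obtain z where z: "wQ $ i = of_int z" using wInt[OF i] by (elim Ints_cases)
    show "map_vec of_int w $ i = wQ $ i" unfolding w_def using i z by simp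
  qed (use wQc in \<open>simp add: w_def\<close>)
  have wi: "\<And>i. i < d \<Longrightarrow> wQ $ i = of_int (w $ i)" using ww wc by (metis index_map_vec(1) carrier_vecD)
  have w0: "w \<noteq> 0\<^sub>v d"
  proof
    assume w0: "w = 0\<^sub>v d"
    have "v = 0\<^sub>v d"
    proof (rule eq_vecI)
      fix i assume "i < dim_vec (0\<^sub>v d :: int vec)"
      then have i: "i < d" by simp
      have "vQ $ i = (\<Sum>l<d. transpose_mat \<gamma>1 $$ (i,l) * wQ $ l)"
        unfolding vw by (rule mult_vec_entry[OF g1Tc wQc i])
      also have "\<dots> = 0" by (rule sum.neutral) (use wi w0 in simp)
      finally show "v $ i = 0\<^sub>v d $ i" using vQi[OF i] i by simp
    qed (use v in simp)
    then show False using v0 by contradiction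
  qed
  have wprim: "primitive d w"
    unfolding primitive_def
  proof (intro conjI wc w0 allI impI)
    fix k :: int assume kd: "\<forall>i<d. k dvd w $ i"
    show "is_unit k"
    proof (rule ccontr)
      assume nu: "\<not> is_unit k"
      have k0: "k \<noteq> 0"
      proof
        assume "k = 0"
        then have "w = 0\<^sub>v d" using kd wc by (intro eq_vecI) auto
        then show False using w0 by contradiction
      qed
      obtain q where q: "prime q" "q dvd k" using prime_divisorE[OF k0 nu] by blast
      have q0: "q > 0" using q(1) by (simp add: prime_gt_0_int)
      define qn where "qn = nat q"
      have qn: "prime qn" "int qn = q" using q q0 unfolding qn_def by auto
      have wq1: "\<forall>l<d. in_pZ qn 1 (wQ $ l)"
      proof (intro allI impI)
        fix l assume l: "l < d"
        have "int qn dvd w $ l" using kd l q(2) qn(2) by (metis dvd_trans)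
        then show "in_pZ qn 1 (wQ $ l)" using wi[OF l] pZ_dvd_int[OF qn(1)] by simp
      qed
      have qdv: "\<forall>i<d. int qn dvd v $ i"
      proof (intro allI impI)
        fix i assume i: "i < d"
        have "in_pZ qn 1 (vQ $ i)"
        proof (cases "qn = p")
          case False
          show ?thesis unfolding vw by (rule mat_vec_pZ[OF qn(1) g1Tc wQc g1TZ[OF qn(1) False] wq1 i])
        next
          case True
          have s: "padic_num_eq p (\<lambda>n. vQ $ i) (\<lambda>n. (c1 n *\<^sub>v wQ) $ i)"
            using padic_vec_eq_sym[OF cw] i unfolding padic_vec_eq_def by blast
          have ev: "eventually (\<lambda>n. in_pZ p 1 ((c1 n *\<^sub>v wQ) $ i)) sequentially"
            unfolding eventually_sequentially
          proof (intro exI[of _ N1] allI impI)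
            fix n assume n: "N1 \<le> n"
            show "in_pZ p 1 ((c1 n *\<^sub>v wQ) $ i)"
              by (rule mat_vec_pZ[OF p c1c wQc c1_int[OF n] wq1[unfolded True] i])
          qed
          show ?thesis unfolding True by (rule padic_limit_const[OF p s ev])
        qed
        then show "int qn dvd v $ i" using vQi[OF i] pZ_int_dvd[OF qn(1)] by simp
      qed
      have "is_unit (int qn)" by (rule vprim[OF qdv])
      then show False using qn by simp
    qed
  qed
  define M where "M = \<gamma>1 * G * \<gamma>2"
  have g1Gc: "\<gamma>1 * G \<in> carrier_mat d d" by (rule mult_carrier_mat[OF g1c Gc])
  have Gg2c: "G * \<gamma>2 \<in> carrier_mat d d" by (rule mult_carrier_mat[OF Gc g2c])
  have Mc: "M \<in> carrier_mat d d" unfolding M_def by (rule mult_carrier_mat[OF g1Gc g2c])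
  have Gic: "mat_inv d G \<in> carrier_mat d d" and GGi: "G * mat_inv d G = 1\<^sub>m d"
    using mat_inv_props[OF Gc dG] by blast+
  have Tic: "mat_inv d \<gamma>2 \<in> carrier_mat d d" and TiT: "mat_inv d \<gamma>2 * \<gamma>2 = 1\<^sub>m d"
    using mat_inv_props[OF g2c dg2] by blast+
  have GZ: "\<forall>i<d. \<forall>j<d. in_pZ q 0 (G $$ (i,j))" if q: "prime q" for q :: nat
  proof (intro allI impI)
    fix i j assume ij: "i < d" "j < d"
    have "G $$ (i,j) = of_int (g $$ (i,j))" unfolding G_def using g ij by simp
    then show "in_pZ q 0 (G $$ (i,j))" using pZ_int[OF q] by simp
  qed
  have g2Zq: "\<forall>i<d. \<forall>l<d. in_pZ q 0 (\<gamma>2 $$ (i,l))" if q: "prime q" "q \<noteq> p" for q :: nat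
  proof (intro allI impI)
    fix i l assume il: "i < d" "l < d"
    have "in_Zinvp p (\<gamma>2 $$ (i,l))" using g2Z il by blast
    then show "in_pZ q 0 (\<gamma>2 $$ (i,l))" by (rule pZ_Zinvp[OF p q(1) q(2)])
  qed
  have MZq: "\<forall>i<d. \<forall>j<d. in_pZ q 0 (M $$ (i,j))" if q: "prime q" "q \<noteq> p" for q :: nat
  proof -
    have "\<forall>i<d. \<forall>j<d. in_pZ q 0 ((\<gamma>1 * G) $$ (i,j))"
      by (rule mat_mult_pZ[OF q(1) g1c Gc g1Zq[OF q] GZ[OF q(1)]])
    then show ?thesis unfolding M_def by (rule mat_mult_pZ[OF q(1) g1Gc g2c _ g2Zq[OF q]])
  qed
  obtain N2 where N2: "\<forall>n\<ge>N2. \<forall>i<d. \<forall>j<d. in_pZ p 0 (c2 n $$ (i,j))"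
    using c2int unfolding padic_integral_def by blast
  have c1g1c: "\<And>n. c1 n * \<gamma>1 \<in> carrier_mat d d" by (rule mult_carrier_mat[OF c1c g1c])
  have st_b: "padic_mat_eq p d (\<lambda>n. c1 n * \<gamma>1 * (G * \<gamma>2)) (\<lambda>n. h n * (G * \<gamma>2))"
    by (rule mat_eq_mult_right[where A="\<lambda>n. G * \<gamma>2", OF p Gg2c c1g1c hc mbnd_const[OF p] padic_mat_eq_sym[OF E1]])
  have Gihc: "\<And>n. mat_inv d G * h n * G \<in> carrier_mat d d"
    by (rule mult_carrier_mat[OF mult_carrier_mat[OF Gic hc] Gc])
  have c2Tc: "\<And>n. c2 n * mat_inv d \<gamma>2 \<in> carrier_mat d d" by (rule mult_carrier_mat[OF c2c Tic])
  have st_c: "padic_mat_eq p d (\<lambda>n. G * (mat_inv d G * h n * G)) (\<lambda>n. G * (c2 n * mat_inv d \<gamma>2))"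
    by (rule mat_eq_mult_left[where A="\<lambda>n. G", OF p Gc Gihc c2Tc mbnd_const[OF p] E2])
  have st_d: "padic_mat_eq p d (\<lambda>n. G * (mat_inv d G * h n * G) * \<gamma>2) (\<lambda>n. G * (c2 n * mat_inv d \<gamma>2) * \<gamma>2)"
    by (rule mat_eq_mult_right[where A="\<lambda>n. \<gamma>2", OF p g2c mult_carrier_mat[OF Gc Gihc] mult_carrier_mat[OF Gc c2Tc] mbnd_const[OF p] st_c])
  have rw1: "G * (mat_inv d G * h n * G) * \<gamma>2 = h n * (G * \<gamma>2)" for n
  proof -
    have "G * (mat_inv d G * h n * G) = (G * (mat_inv d G * h n)) * G"
      by (rule assoc_mult_mat[OF Gc mult_carrier_mat[OF Gic hc] Gc, symmetric])
    also have "G * (mat_inv d G * h n) = (G * mat_inv d G) * h n"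
      by (rule assoc_mult_mat[OF Gc Gic hc, symmetric])
    also have "(G * mat_inv d G) * h n = h n" unfolding GGi by (rule left_mult_one_mat[OF hc])
    finally have "G * (mat_inv d G * h n * G) = h n * G" .
    then have "G * (mat_inv d G * h n * G) * \<gamma>2 = h n * G * \<gamma>2" by simp
    also have "\<dots> = h n * (G * \<gamma>2)" by (rule assoc_mult_mat[OF hc Gc g2c])
    finally show ?thesis .
  qed
  have rw2: "G * (c2 n * mat_inv d \<gamma>2) * \<gamma>2 = G * c2 n" for n
  proof -
    have "G * (c2 n * mat_inv d \<gamma>2) * \<gamma>2 = G * ((c2 n * mat_inv d \<gamma>2) * \<gamma>2)"
      by (rule assoc_mult_mat[OF Gc c2Tc g2c])
    also have "(c2 n * mat_inv d \<gamma>2) * \<gamma>2 = c2 n * (mat_inv d \<gamma>2 * \<gamma>2)"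
      by (rule assoc_mult_mat[OF c2c Tic g2c])
    also have "c2 n * (mat_inv d \<gamma>2 * \<gamma>2) = c2 n" unfolding TiT by (rule right_mult_one_mat[OF c2c])
    finally show ?thesis .
  qed
  have st_d': "padic_mat_eq p d (\<lambda>n. h n * (G * \<gamma>2)) (\<lambda>n. G * c2 n)"
    using st_d unfolding rw1 rw2 .
  have st_e: "padic_mat_eq p d (\<lambda>n. c1 n * \<gamma>1 * (G * \<gamma>2)) (\<lambda>n. G * c2 n)"
    by (rule padic_mat_eq_trans[OF p st_b st_d'])
  have st_f: "padic_mat_eq p d (\<lambda>n. transpose_mat (c1 n) * (c1 n * \<gamma>1 * (G * \<gamma>2))) (\<lambda>n. transpose_mat (c1 n) * (G * c2 n))"
    by (rule mat_eq_mult_left[OF p c1Tc mult_carrier_mat[OF c1g1c Gg2c] mult_carrier_mat[OF Gc c2c] c1Tb st_e])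
  have rw3: "transpose_mat (c1 n) * (c1 n * \<gamma>1 * (G * \<gamma>2)) = (transpose_mat (c1 n) * c1 n) * M" for n
  proof -
    have "c1 n * \<gamma>1 * (G * \<gamma>2) = c1 n * (\<gamma>1 * (G * \<gamma>2))" by (rule assoc_mult_mat[OF c1c g1c Gg2c])
    also have "\<gamma>1 * (G * \<gamma>2) = M" unfolding M_def by (rule assoc_mult_mat[OF g1c Gc g2c, symmetric])
    finally have "c1 n * \<gamma>1 * (G * \<gamma>2) = c1 n * M" .
    then have "transpose_mat (c1 n) * (c1 n * \<gamma>1 * (G * \<gamma>2)) = transpose_mat (c1 n) * (c1 n * M)" by simp
    also have "\<dots> = (transpose_mat (c1 n) * c1 n) * M" by (rule assoc_mult_mat[OF c1Tc c1c Mc, symmetric])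
    finally show ?thesis .
  qed
  have st_f': "padic_mat_eq p d (\<lambda>n. (transpose_mat (c1 n) * c1 n) * M) (\<lambda>n. transpose_mat (c1 n) * (G * c2 n))"
    using st_f unfolding rw3 .
  have st_g: "padic_mat_eq p d (\<lambda>n. (transpose_mat (c1 n) * c1 n) * M) (\<lambda>n. 1\<^sub>m d * M)"
    by (rule mat_eq_mult_right[where A="\<lambda>n. M", OF p Mc mult_carrier_mat[OF c1Tc c1c] one_carrier_mat mbnd_const[OF p] c1o])
  have "1\<^sub>m d * M = M" by (rule left_mult_one_mat[OF Mc])
  then have st_g': "padic_mat_eq p d (\<lambda>n. (transpose_mat (c1 n) * c1 n) * M) (\<lambda>n. M)"
    using st_g by simp
  have st_h: "padic_mat_eq p d (\<lambda>n. M) (\<lambda>n. transpose_mat (c1 n) * (G * c2 n))"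
    by (rule padic_mat_eq_trans[OF p padic_mat_eq_sym[OF st_g'] st_f'])
  have MZp: "\<forall>i<d. \<forall>j<d. in_pZ p 0 (M $$ (i,j))"
  proof (intro allI impI)
    fix i j assume ij: "i < d" "j < d"
    have s: "padic_num_eq p (\<lambda>n. M $$ (i,j)) (\<lambda>n. (transpose_mat (c1 n) * (G * c2 n)) $$ (i,j))"
      using st_h ij unfolding padic_mat_eq_def by blast
    have ev: "eventually (\<lambda>n. in_pZ p 0 ((transpose_mat (c1 n) * (G * c2 n)) $$ (i,j))) sequentially"
      unfolding eventually_sequentially
    proof (intro exI[of _ "max N1 N2"] allI impI)
      fix n assume n: "max N1 N2 \<le> n"
      have c2n: "\<forall>i<d. \<forall>j<d. in_pZ p 0 (c2 n $$ (i,j))" using N2 n by simp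
      have n1: "n \<ge> N1" using n by simp
      have Gc2: "\<forall>i<d. \<forall>j<d. in_pZ p 0 ((G * c2 n) $$ (i,j))"
        by (rule mat_mult_pZ[OF p Gc c2c GZ[OF p] c2n])
      have "\<forall>i<d. \<forall>j<d. in_pZ p 0 ((transpose_mat (c1 n) * (G * c2 n)) $$ (i,j))"
        by (rule mat_mult_pZ[OF p c1Tc mult_carrier_mat[OF Gc c2c] c1T_int[OF n1] Gc2])
      then show "in_pZ p 0 ((transpose_mat (c1 n) * (G * c2 n)) $$ (i,j))" using ij by blast
    qed
    show "in_pZ p 0 (M $$ (i,j))" by (rule padic_limit_const[OF p s ev])
  qed
  have MInt: "M $$ (i,j) \<in> \<int>" if ij: "i < d" "j < d" for i j
  proof (rule pZ_all_Ints)
    fix q :: nat assume q: "prime q"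
    show "in_pZ q 0 (M $$ (i,j))"
    proof (cases "q = p")
      case True then show ?thesis using MZp ij by simp
    next
      case False then show ?thesis using MZq[OF q False] ij by blast
    qed
  qed
  define Mi where "Mi = mat d d (\<lambda>(i,j). \<lfloor>M $$ (i,j)\<rfloor>)"
  have Mic: "Mi \<in> carrier_mat d d" unfolding Mi_def by simp
  have MiM: "map_mat of_int Mi = M"
  proof (rule eq_matI)
    fix i j assume "i < dim_row M" "j < dim_col M"
    then have ij: "i < d" "j < d" using Mc by auto
    obtain z where z: "M $$ (i,j) = of_int z" using MInt[OF ij] by (elim Ints_cases)
    show "map_mat of_int Mi $$ (i,j) = M $$ (i,j)" unfolding Mi_def using ij z by simp
  qed (use Mc in \<open>simp_all add: Mi_def\<close>)
  have dM: "det M = 1"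
    unfolding M_def using det_mult[OF g1Gc g2c] det_mult[OF g1c Gc] dg1 dG dg2 by simp
  have dMi: "det Mi = 1"
  proof -
    have "(of_int (det Mi) :: rat) = det M" unfolding MiM[symmetric] of_int_hom.hom_det ..
    then show ?thesis using dM by simp
  qed
  have Gp: "first_cols G (d-1) \<in> carrier_mat d (d-1)" by (rule fc_carrier[OF Gc])
  have Gcol: "col G l \<bullet> vQ = 0" if l: "l < d-1" for l
  proof -
    have zl: "zspan (first_cols G (d-1)) = Lambda d v" using Gbasis unfolding lattice_basis_def by blast
    have "col (first_cols G (d-1)) l \<in> Lambda d v" unfolding zl[symmetric] by (rule col_in_zspan[OF Gp l])
    then have "col G l \<in> Lambda d v" unfolding fc_col[OF l] .
    then obtain x where x: "col G l = map_vec of_int x" "x \<in> carrier_vec d" "x \<bullet> v = 0"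
      unfolding Lambda_def by blast
    have "col G l \<bullet> vQ = of_int (x \<bullet> v)" unfolding x(1) vQ_def by (rule sp_hom[OF x(2) v])
    then show ?thesis using x(3) by simp
  qed
  have GTv: "(transpose_mat G *\<^sub>v vQ) $ l = 0" if l: "l < d-1" for l
  proof -
    have l': "l < d" using l by simp
    have "(transpose_mat G *\<^sub>v vQ) $ l = row (transpose_mat G) l \<bullet> vQ"
      using Gc l' by (intro index_mult_mat_vec) simp
    also have "row (transpose_mat G) l = col G l" using Gc l' by (intro row_transpose) simp
    finally show ?thesis using Gcol[OF l] by simp
  qed
  have orth: "wQ \<bullet> col M j = 0" if j: "j < d-1" for j
  proof -
    have jd: "j < d" using j by simp
    define c where "c = col \<gamma>2 j"
    have cc: "c \<in> carrier_vec d" unfolding c_def using col_dim[of \<gamma>2 j] g2c by simp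
    have clast: "c $ (d-1) = 0" unfolding c_def using g2last g2c j d1 by simp
    have GcC: "G *\<^sub>v c \<in> carrier_vec d" by (rule mult_mat_vec_carrier[OF Gc cc])
    have "(transpose_mat G *\<^sub>v vQ) \<bullet> c = (\<Sum>l\<in>{0..<d}. (transpose_mat G *\<^sub>v vQ) $ l * c $ l)"
      unfolding scalar_prod_def using cc by simp
    also have "\<dots> = 0"
    proof (rule sum.neutral, intro ballI)
      fix l assume "l \<in> {0..<d}"
      then have l: "l < d" by simp
      show "(transpose_mat G *\<^sub>v vQ) $ l * c $ l = 0"
      proof (cases "l < d-1")
        case True then show ?thesis using GTv by simp
      next
        case False then have "l = d-1" using l by simp
        then show ?thesis using clast by simp
      qed
    qed
    finally have z1: "(transpose_mat G *\<^sub>v vQ) \<bullet> c = 0" .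
    have z2: "(transpose_mat G *\<^sub>v vQ) \<bullet> c = vQ \<bullet> (G *\<^sub>v c)"
      by (rule transpose_vec_mult_scalar[OF Gc cc vQc])
    have colM: "col M j = \<gamma>1 *\<^sub>v (G *\<^sub>v c)"
    proof -
      have "col M j = (\<gamma>1 * G) *\<^sub>v col \<gamma>2 j" unfolding M_def by (rule col_mult2[OF g1Gc g2c jd])
      also have "\<dots> = \<gamma>1 *\<^sub>v (G *\<^sub>v c)" unfolding c_def[symmetric] by (rule assoc_mult_mat_vec[OF g1c Gc cc])
      finally show ?thesis .
    qed
    have "(transpose_mat \<gamma>1 *\<^sub>v wQ) \<bullet> (G *\<^sub>v c) = wQ \<bullet> (\<gamma>1 *\<^sub>v (G *\<^sub>v c))"
      by (rule transpose_vec_mult_scalar[OF g1c GcC wQc])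
    then have "wQ \<bullet> col M j = vQ \<bullet> (G *\<^sub>v c)" unfolding colM vw[symmetric] by simp
    then show ?thesis using z1 z2 by simp
  qed
  have orthI: "w \<bullet> col Mi j = 0" if j: "j < d-1" for j
  proof -
    have jd: "j < d" using j by simp
    have cM: "col M j = map_vec of_int (col Mi j)" unfolding MiM[symmetric] using Mic jd by simp
    have cMic: "col Mi j \<in> carrier_vec d" using col_dim[of Mi j] Mic by simp
    have "(of_int (w \<bullet> col Mi j) :: rat) = wQ \<bullet> col M j"
      unfolding cM ww[symmetric] by (rule sp_hom[OF wc cMic, symmetric])
    then show ?thesis using orth[OF j] by simp
  qed
  define B where "B = first_cols M (d-1)"
  define Bi where "Bi = first_cols Mi (d-1)"
  have Bc: "B \<in> carrier_mat d (d-1)" unfolding B_def by (rule fc_carrier[OF Mc])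
  have Bic: "Bi \<in> carrier_mat d (d-1)" unfolding Bi_def by (rule fc_carrier[OF Mic])
  have BBi: "B = map_mat of_int Bi"
    unfolding B_def Bi_def MiM[symmetric] using Mic by (intro fc_map) simp
  have BiTw: "transpose_mat Bi *\<^sub>v w = 0\<^sub>v (d-1)"
  proof (rule eq_vecI)
    fix j assume "j < dim_vec (0\<^sub>v (d-1) :: int vec)"
    then have j: "j < d-1" by simp
    have "(transpose_mat Bi *\<^sub>v w) $ j = row (transpose_mat Bi) j \<bullet> w"
      using Bic j by (intro index_mult_mat_vec) simp
    also have "row (transpose_mat Bi) j = col Bi j" using Bic j by (intro row_transpose) simp
    also have "col Bi j = col Mi j" unfolding Bi_def by (rule fc_col[OF j])
    also have "col Mi j \<bullet> w = w \<bullet> col Mi j"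
      using comm_scalar_prod[OF _ wc, of "col Mi j"] col_dim[of Mi j] Mic by simp
    finally show "(transpose_mat Bi *\<^sub>v w) $ j = 0\<^sub>v (d-1) $ j" using orthI[OF j] j by simp
  qed (use Bic in simp)
  have MTw: "(transpose_mat Mi *\<^sub>v w) $ l = 0" if l: "l < d-1" for l
  proof -
    have l': "l < d" using l by simp
    have "(transpose_mat Mi *\<^sub>v w) $ l = row (transpose_mat Mi) l \<bullet> w"
      using Mic l' by (intro index_mult_mat_vec) simp
    also have "row (transpose_mat Mi) l = col Mi l" using Mic l' by (intro row_transpose) simp
    also have "col Mi l \<bullet> w = w \<bullet> col Mi l"
      using comm_scalar_prod[OF _ wc, of "col Mi l"] col_dim[of Mi l] Mic by simp
    finally show ?thesis using orthI[OF l] by simp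
  qed
  have MiTc: "transpose_mat Mi \<in> carrier_mat d d" using Mic by simp
  have dMiT: "det (transpose_mat Mi) \<noteq> 0" using det_transpose[OF Mic] dMi by simp
  have dMi0: "det Mi \<noteq> 0" using dMi by simp
  have inj: "y = 0\<^sub>v d" if y: "y \<in> carrier_vec d" "Mi *\<^sub>v y = 0\<^sub>v d" for y
    using det_0_iff_vec_prod_zero[OF Mic] dMi0 y by blast
  have slast: "(transpose_mat Mi *\<^sub>v w) $ (d-1) \<noteq> 0"
  proof
    assume s0: "(transpose_mat Mi *\<^sub>v w) $ (d-1) = 0"
    have "transpose_mat Mi *\<^sub>v w = 0\<^sub>v d"
    proof (rule eq_vecI)
      fix l assume "l < dim_vec (0\<^sub>v d :: int vec)"
      then have l: "l < d" by simp
      show "(transpose_mat Mi *\<^sub>v w) $ l = 0\<^sub>v d $ l"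
      proof (cases "l < d-1")
        case True then show ?thesis using MTw l by simp
      next
        case False then have "l = d-1" using l by simp
        then show ?thesis using s0 l by simp
      qed
    qed (use MiTc in simp)
    then show False using det_0_iff_vec_prod_zero[OF MiTc] dMiT wc w0 by blast
  qed
  have adjI: "Mi * adj_mat Mi = 1\<^sub>m d"
  proof -
    have "Mi * adj_mat Mi = det Mi \<cdot>\<^sub>m 1\<^sub>m d" by (rule adj_mat(2)[OF Mic])
    also have "\<dots> = 1\<^sub>m d" unfolding dMi by (rule eq_matI) auto
    finally show ?thesis .
  qed
  have adjc: "adj_mat Mi \<in> carrier_mat d d" by (rule adj_mat(1)[OF Mic])
  have zB: "zspan B = {map_vec of_int (Bi *\<^sub>v c) | c. c \<in> carrier_vec (d-1)}"
  proof -
    have eq: "\<And>c. c \<in> carrier_vec (d-1) \<Longrightarrow> B *\<^sub>v map_vec of_int c = map_vec of_int (Bi *\<^sub>v c)"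
      unfolding BBi by (rule of_int_hom.mult_mat_vec_hom[OF Bic, symmetric])
    have dB: "dim_col B = d-1" using Bc by simp
    show ?thesis unfolding zspan_def dB
    proof (intro equalityI subsetI)
      fix z assume "z \<in> {B *\<^sub>v map_vec of_int c |c. c \<in> carrier_vec (d-1)}"
      then obtain c where c: "z = B *\<^sub>v map_vec of_int c" "c \<in> carrier_vec (d-1)" by blast
      then have "z = (map_vec of_int (Bi *\<^sub>v c) :: rat vec)" using eq by simp
      then show "z \<in> {(map_vec of_int (Bi *\<^sub>v c) :: rat vec) |c. c \<in> carrier_vec (d-1)}" using c(2) by blast
    next
      fix z assume "z \<in> {(map_vec of_int (Bi *\<^sub>v c) :: rat vec) |c. c \<in> carrier_vec (d-1)}"
      then obtain c where c: "z = (map_vec of_int (Bi *\<^sub>v c) :: rat vec)" "c \<in> carrier_vec (d-1)" by blast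
      then have "z = B *\<^sub>v map_vec of_int c" using eq by simp
      then show "z \<in> {B *\<^sub>v map_vec of_int c |c. c \<in> carrier_vec (d-1)}" using c(2) by blast
    qed
  qed
  have lat: "zspan B = Lambda d w"
  proof
    show "zspan B \<subseteq> Lambda d w"
    proof
      fix z assume "z \<in> zspan B"
      then obtain c where c: "c \<in> carrier_vec (d-1)" and z: "z = map_vec of_int (Bi *\<^sub>v c)"
        unfolding zB by blast
      have xc: "Bi *\<^sub>v c \<in> carrier_vec d" by (rule mult_mat_vec_carrier[OF Bic c])
      have "(transpose_mat Bi *\<^sub>v w) \<bullet> c = w \<bullet> (Bi *\<^sub>v c)" by (rule transpose_vec_mult_scalar[OF Bic c wc])
      then have "w \<bullet> (Bi *\<^sub>v c) = 0" unfolding BiTw using c by simp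
      then have "(Bi *\<^sub>v c) \<bullet> w = 0" using comm_scalar_prod[OF xc wc] by simp
      then show "z \<in> Lambda d w" unfolding Lambda_def z using xc by blast
    qed
  next
    show "Lambda d w \<subseteq> zspan B"
    proof
      fix z assume "z \<in> Lambda d w"
      then obtain x where x: "x \<in> carrier_vec d" "x \<bullet> w = 0" and z: "z = map_vec of_int x"
        unfolding Lambda_def by blast
      define y where "y = adj_mat Mi *\<^sub>v x"
      have yc: "y \<in> carrier_vec d" unfolding y_def by (rule mult_mat_vec_carrier[OF adjc x(1)])
      have My: "Mi *\<^sub>v y = x"
      proof -
        have "Mi *\<^sub>v y = (Mi * adj_mat Mi) *\<^sub>v x" unfolding y_def by (rule assoc_mult_mat_vec[OF Mic adjc x(1), symmetric])
        also have "\<dots> = x" unfolding adjI by (rule one_mult_mat_vec[OF x(1)])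
        finally show ?thesis .
      qed
      have "(transpose_mat Mi *\<^sub>v w) \<bullet> y = w \<bullet> (Mi *\<^sub>v y)" by (rule transpose_vec_mult_scalar[OF Mic yc wc])
      also have "\<dots> = w \<bullet> x" unfolding My ..
      also have "\<dots> = x \<bullet> w" by (rule comm_scalar_prod[OF wc x(1)])
      finally have e0: "(transpose_mat Mi *\<^sub>v w) \<bullet> y = 0" using x(2) by simp
      have "(transpose_mat Mi *\<^sub>v w) \<bullet> y = (\<Sum>l<d. (transpose_mat Mi *\<^sub>v w) $ l * y $ l)"
        unfolding scalar_prod_def using yc by (simp add: atLeast0LessThan)
      also have "\<dots> = (\<Sum>l<d-1. (transpose_mat Mi *\<^sub>v w) $ l * y $ l) + (transpose_mat Mi *\<^sub>v w) $ (d-1) * y $ (d-1)"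
        by (rule sum_last[OF d1])
      also have "(\<Sum>l<d-1. (transpose_mat Mi *\<^sub>v w) $ l * y $ l) = 0"
        by (rule sum.neutral) (use MTw in simp)
      finally have "(transpose_mat Mi *\<^sub>v w) $ (d-1) * y $ (d-1) = 0" using e0 by simp
      then have y0: "y $ (d-1) = 0" using slast by simp
      define c where "c = vec (d-1) (\<lambda>l. y $ l)"
      have cc: "c \<in> carrier_vec (d-1)" unfolding c_def by simp
      have "Bi *\<^sub>v c = x" unfolding c_def Bi_def My[symmetric] by (rule fc_mult_vec[OF Mic d1 yc y0])
      then have "z = map_vec of_int (Bi *\<^sub>v c)" using z by simp
      then show "z \<in> zspan B" unfolding zB using cc by blast
    qed
  qed
  have Bbasis: "lattice_basis B (zspan B)"
    unfolding lattice_basis_def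
  proof (intro conjI refl ballI impI)
    fix c assume c: "c \<in> carrier_vec (dim_col B)" and Bc0: "B *\<^sub>v map_vec of_int c = 0\<^sub>v (dim_row B)"
    have cc: "c \<in> carrier_vec (d-1)" using c Bc by simp
    have "map_vec of_int (Bi *\<^sub>v c) = (0\<^sub>v d :: rat vec)"
      using Bc0 Bc unfolding BBi of_int_hom.mult_mat_vec_hom[OF Bic cc] by simp
    then have Bi0: "Bi *\<^sub>v c = 0\<^sub>v d" by (rule of_int_hom.vec_hom_zero_iff[THEN iffD1])
    define y where "y = vec d (\<lambda>l. if l < d-1 then c $ l else 0)"
    have yc: "y \<in> carrier_vec d" unfolding y_def by simp
    have y0: "y $ (d-1) = 0" unfolding y_def using d1 by simp
    have cy: "vec (d-1) (\<lambda>l. y $ l) = c"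
      unfolding y_def using cc by (intro eq_vecI) auto
    have "Mi *\<^sub>v y = Bi *\<^sub>v c" unfolding Bi_def cy[symmetric] by (rule fc_mult_vec[OF Mic d1 yc y0, symmetric])
    then have "y = 0\<^sub>v d" using inj[OF yc] Bi0 by simp
    then show "c = 0\<^sub>v (dim_col B)" using cy Bc by auto
  qed
  have covB: "covol d (zspan B) = sqrt (real_of_rat (det (transpose_mat B * B)))"
    by (rule covol_eq[OF Bc Bbasis])
  have covV: "covol d (Lambda d v) = sqrt (real_of_rat (det (transpose_mat (first_cols G (d-1)) * first_cols G (d-1))))"
    by (rule covol_eq[OF Gp Gbasis])
  define A where "A = mat (d-1) (d-1) (\<lambda>(i,j). \<gamma>2 $$ (i,j))"
  have Ac: "A \<in> carrier_mat (d-1) (d-1)" unfolding A_def by simp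
  have dA: "det A = 1" unfolding A_def using det_block[OF g2c d1] g2last dg2 by simp
  define G' where "G' = first_cols G (d-1)"
  define K where "K = \<gamma>1 * G'"
  have Kc: "K \<in> carrier_mat d (d-1)" unfolding K_def G'_def by (rule mult_carrier_mat[OF g1c Gp])
  have BKA: "B = K * A"
  proof -
    have "B = first_cols (\<gamma>1 * G) (d-1) * A" unfolding B_def M_def A_def
      by (rule fc_mult_right[OF g1Gc g2c d1]) (use g2last in simp)
    also have "first_cols (\<gamma>1 * G) (d-1) = \<gamma>1 * first_cols G (d-1)"
      by (rule fc_mult_left[OF g1c Gc]) simp
    finally show ?thesis unfolding K_def G'_def .
  qed
  have KK: "transpose_mat K * K = transpose_mat G' * G'"
  proof -
    have G'c: "G' \<in> carrier_mat d (d-1)" unfolding G'_def by (rule Gp)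
    have G'Tc: "transpose_mat G' \<in> carrier_mat (d-1) d" using G'c by simp
    have "transpose_mat K * K = (transpose_mat G' * transpose_mat \<gamma>1) * (\<gamma>1 * G')"
      unfolding K_def using transpose_mult[OF g1c G'c] by simp
    also have "\<dots> = transpose_mat G' * (transpose_mat \<gamma>1 * (\<gamma>1 * G'))"
      by (rule assoc_mult_mat[OF G'Tc g1Tc mult_carrier_mat[OF g1c G'c]])
    also have "transpose_mat \<gamma>1 * (\<gamma>1 * G') = (transpose_mat \<gamma>1 * \<gamma>1) * G'"
      by (rule assoc_mult_mat[OF g1Tc g1c G'c, symmetric])
    also have "\<dots> = G'" unfolding g1o by (rule left_mult_one_mat[OF G'c])
    finally show ?thesis .
  qed
  have dBB: "det (transpose_mat B * B) = det (transpose_mat G' * G')"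
  proof -
    have KTc: "transpose_mat K \<in> carrier_mat (d-1) d" using Kc by simp
    have ATc: "transpose_mat A \<in> carrier_mat (d-1) (d-1)" using Ac by simp
    have KKc: "transpose_mat K * K \<in> carrier_mat (d-1) (d-1)" using mult_carrier_mat[OF KTc Kc] .
    have "transpose_mat B * B = (transpose_mat A * transpose_mat K) * (K * A)"
      unfolding BKA using transpose_mult[OF Kc Ac] by simp
    also have "\<dots> = transpose_mat A * (transpose_mat K * (K * A))"
      by (rule assoc_mult_mat[OF ATc KTc mult_carrier_mat[OF Kc Ac]])
    also have "transpose_mat K * (K * A) = (transpose_mat K * K) * A"
      by (rule assoc_mult_mat[OF KTc Kc Ac, symmetric])
    finally have e: "transpose_mat B * B = transpose_mat A * ((transpose_mat K * K) * A)" .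
    have "det (transpose_mat B * B) = det (transpose_mat A) * det ((transpose_mat K * K) * A)"
      unfolding e by (rule det_mult[OF ATc mult_carrier_mat[OF KKc Ac]])
    also have "det ((transpose_mat K * K) * A) = det (transpose_mat K * K) * det A"
      by (rule det_mult[OF KKc Ac])
    also have "det (transpose_mat A) = det A" by (rule det_transpose[OF Ac])
    finally show ?thesis unfolding KK dA by simp
  qed
  have wv: "\<gamma>1 *\<^sub>v map_vec of_int v = map_vec of_int w" unfolding ww wQ_def vQ_def ..
  have BB: "first_cols (\<gamma>1 * map_mat of_int g * \<gamma>2) (d-1) = B" unfolding B_def M_def G_def ..
  show ?thesis
    unfolding BB
  proof (intro exI[of _ w] conjI wv wprim lat)
    show "covol d (zspan B) = covol d (Lambda d v)"
      unfolding covB covV dBB G'_def ..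
  qed
qed

end
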